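(* Let $u$ and $v$ be two prime words such that $u\le_{lex}v$, and let $\alpha$ and $\beta$ be two non-zero ordinals. Then $u^\alpha v^\beta=w^\gamma$ for some prime word $w$ and some ordinal $\gamma$, where either $w=v$ and $\gamma\in\{\beta,\alpha+\beta\}$, or $w=u^\alpha v^\beta$ and $\gamma=1$.
   Context: $A$ is a finite alphabet with a linear order $<_A$. Words are sequences of letters indexed by countable ordinals, $x^\alpha$ is the concatenation of $\alpha$ copies of $x$. A suffix of $x$ is $x[\gamma,|x|)$, proper if $0<\gamma<|x|$. Write $x<_{str}x'$ if there are letters $a<_Ab$ and words $y,z,z'$ with $x=yaz$, $x'=ybz'$; $x\le_{lex}x'$ iff $x$ is a prefix of $x'$ or $x<_{str}x'$. A word is primitive if $x=y^\alpha$ implies $\alpha=1$ and $y=x$; $w$ is prime if it is primitive and every proper suffix $z$ satisfies $w\le_{lex}z$. *)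

theory Defs
  imports Main "HOL-Library.Nat_Bijection"
begin

text \<open>Countable ordinals are represented by well-orders whose field is a subset of nat
 (every countable ordinal arises this way); ordinal equality is order isomorphism.
 Words of countable length are labelled well-orders on subsets of nat:
 a pair (r, f) with r a well-order and f the labelling of positions in Field r;
 word equality is isomorphism of labelled well-orders.\<close>

type_synonym 'a word = "nat rel \<times> (nat \<Rightarrow> 'a)"

definition is_word :: "'a word \<Rightarrow> bool" where
  "is_word x \<longleftrightarrow> Well_order (fst x)"

definition word_iso :: "'a word \<Rightarrow> 'a word \<Rightarrow> bool" where
  "word_iso x y \<longleftrightarrow> (\<exists>f. bij_betw f (Field (fst x)) (Field (fst y))
     \<and> (\<forall>i\<in>Field (fst x). \<forall>j\<in>Field (fst x). (i, j) \<in> fst x \<longleftrightarrow> (f i, f j) \<in> fst y)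
     \<and> (\<forall>i\<in>Field (fst x). snd y (f i) = snd x i))"

definition is_ord :: "nat rel \<Rightarrow> bool" where
  "is_ord \<alpha> \<longleftrightarrow> Well_order \<alpha>"

definition ord_eq :: "nat rel \<Rightarrow> nat rel \<Rightarrow> bool" where
  "ord_eq \<alpha> \<beta> \<longleftrightarrow> word_iso (\<alpha>, \<lambda>_. ()) (\<beta>, \<lambda>_. ())"

definition ord_one :: "nat rel" where
  "ord_one = {(0, 0)}"

definition rsum :: "nat rel \<Rightarrow> nat rel \<Rightarrow> nat rel" where
  "rsum r s =
     {(sum_encode (Inl i), sum_encode (Inl j)) | i j. (i, j) \<in> r}
   \<union> {(sum_encode (Inr i), sum_encode (Inr j)) | i j. (i, j) \<in> s}
   \<union> {(sum_encode (Inl i), sum_encode (Inr j)) | i j. i \<in> Field r \<and> j \<in> Field s}"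

definition ord_add :: "nat rel \<Rightarrow> nat rel \<Rightarrow> nat rel" where
  "ord_add \<alpha> \<beta> = rsum \<alpha> \<beta>"

definition conc :: "'a word \<Rightarrow> 'a word \<Rightarrow> 'a word" where
  "conc x y = (rsum (fst x) (fst y),
     \<lambda>n. case sum_decode n of Inl i \<Rightarrow> snd x i | Inr j \<Rightarrow> snd y j)"

definition letter :: "'a \<Rightarrow> 'a word" where
  "letter a = ({(0, 0)}, \<lambda>_. a)"

text \<open>x^\<alpha>: concatenation of \<alpha> copies of x (copy index is the major key).\<close>
definition wpow :: "'a word \<Rightarrow> nat rel \<Rightarrow> 'a word" where
  "wpow x \<alpha> =
     ({(prod_encode (i, b), prod_encode (j, c)) | i j b c.
         i \<in> Field (fst x) \<and> j \<in> Field (fst x) \<and> b \<in> Field \<alpha> \<and> c \<in> Field \<alpha> \<and>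
         (((b, c) \<in> \<alpha> \<and> b \<noteq> c) \<or> (b = c \<and> (i, j) \<in> fst x))},
      \<lambda>n. snd x (fst (prod_decode n)))"

text \<open>Proper suffix x[g,|x|) with 0 < g < |x|: g a position of x which is not the first one.\<close>
definition proper_suffix :: "'a word \<Rightarrow> 'a word \<Rightarrow> bool" where
  "proper_suffix z x \<longleftrightarrow> (\<exists>g\<in>Field (fst x).
      (\<exists>i\<in>Field (fst x). (i, g) \<in> fst x \<and> i \<noteq> g) \<and>
      word_iso z (Restr (fst x) {j \<in> Field (fst x). (g, j) \<in> fst x}, snd x))"

definition is_prefix :: "'a word \<Rightarrow> 'a word \<Rightarrow> bool" where
  "is_prefix x x' \<longleftrightarrow> (\<exists>z. is_word z \<and> word_iso x' (conc x z))"

definition str_less :: "'a::linorder word \<Rightarrow> 'a word \<Rightarrow> bool" where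
  "str_less x x' \<longleftrightarrow> (\<exists>a b y z z'. a < b \<and> is_word y \<and> is_word z \<and> is_word z' \<and>
      word_iso x (conc y (conc (letter a) z)) \<and> word_iso x' (conc y (conc (letter b) z')))"

definition lex_le :: "'a::linorder word \<Rightarrow> 'a word \<Rightarrow> bool" where
  "lex_le x x' \<longleftrightarrow> is_prefix x x' \<or> str_less x x'"

definition primitive :: "'a word \<Rightarrow> bool" where
  "primitive x \<longleftrightarrow> is_word x \<and> (\<forall>y \<alpha>. is_word y \<and> is_ord \<alpha> \<and> word_iso x (wpow y \<alpha>)
      \<longrightarrow> ord_eq \<alpha> ord_one \<and> word_iso y x)"

definition prime_word :: "'a::linorder word \<Rightarrow> bool" where
  "prime_word w \<longleftrightarrow> primitive w \<and> (\<forall>z. proper_suffix z w \<longrightarrow> lex_le w z)"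

end

theory Submission
  imports Defs
begin

unbundle cardinal_syntax


abbreviation sl :: "nat \<Rightarrow> nat" where "sl i \<equiv> sum_encode (Inl i)"
abbreviation sr :: "nat \<Rightarrow> nat" where "sr i \<equiv> sum_encode (Inr i)"
abbreviation pe :: "nat \<Rightarrow> nat \<Rightarrow> nat" where "pe i b \<equiv> prod_encode (i, b)"

definition sub :: "'a word \<Rightarrow> nat set \<Rightarrow> 'a word" where
  "sub x S = (Restr (fst x) S, snd x)"

abbreviation F :: "'a word \<Rightarrow> nat set" where "F x \<equiv> Field (fst x)"

lemma sl_eq[simp]: "sl i = sl j \<longleftrightarrow> i = j" by (simp add: sum_encode_eq)
lemma sr_eq[simp]: "sr i = sr j \<longleftrightarrow> i = j" by (simp add: sum_encode_eq)
lemma sl_sr[simp]: "sl i \<noteq> sr j" "sr j \<noteq> sl i" by (simp_all add: sum_encode_eq)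

lemma nat_cases_sum:
  obtains i where "n = sl i" | j where "n = sr j"
  by (cases "sum_decode n") (metis sum_decode_inverse)+

lemma nat_cases_prod:
  obtains i b where "n = pe i b"
  by (metis prod_decode_inverse surj_pair)

lemma rsum_LL[simp]: "(sl i, sl j) \<in> rsum r s \<longleftrightarrow> (i,j) \<in> r"
  by (auto simp: rsum_def sum_encode_eq)
lemma rsum_RR[simp]: "(sr i, sr j) \<in> rsum r s \<longleftrightarrow> (i,j) \<in> s"
  by (auto simp: rsum_def sum_encode_eq)
lemma rsum_LR[simp]: "(sl i, sr j) \<in> rsum r s \<longleftrightarrow> i \<in> Field r \<and> j \<in> Field s"
  by (auto simp: rsum_def sum_encode_eq)
lemma rsum_RL[simp]: "(sr i, sl j) \<notin> rsum r s"
  by (auto simp: rsum_def sum_encode_eq)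

lemma Field_rsum: "Field (rsum r s) = sl ` Field r \<union> sr ` Field s"
proof (rule set_eqI)
  fix n show "n \<in> Field (rsum r s) \<longleftrightarrow> n \<in> sl ` Field r \<union> sr ` Field s"
  proof (cases n rule: nat_cases_sum)
    case (1 i)
    have "sl i \<in> Field (rsum r s) \<longleftrightarrow> i \<in> Field r"
    proof
      assume "sl i \<in> Field (rsum r s)"
      then obtain m where "(sl i, m) \<in> rsum r s \<or> (m, sl i) \<in> rsum r s" unfolding Field_def by blast
      then show "i \<in> Field r"
        by (cases m rule: nat_cases_sum) (auto intro: FieldI1 FieldI2)
    next
      assume "i \<in> Field r"
      then obtain m where "(i, m) \<in> r \<or> (m, i) \<in> r" unfolding Field_def by blast
      then show "sl i \<in> Field (rsum r s)"
        by (metis FieldI1 FieldI2 rsum_LL)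
    qed
    then show ?thesis using 1 by auto
  next
    case (2 j)
    have "sr j \<in> Field (rsum r s) \<longleftrightarrow> j \<in> Field s"
    proof
      assume "sr j \<in> Field (rsum r s)"
      then obtain m where "(sr j, m) \<in> rsum r s \<or> (m, sr j) \<in> rsum r s" unfolding Field_def by blast
      then show "j \<in> Field s"
        by (cases m rule: nat_cases_sum) (auto intro: FieldI1 FieldI2)
    next
      assume "j \<in> Field s"
      then obtain m where "(j, m) \<in> s \<or> (m, j) \<in> s" unfolding Field_def by blast
      then show "sr j \<in> Field (rsum r s)"
        by (metis FieldI1 FieldI2 rsum_RR)
    qed
    then show ?thesis using 2 by auto
  qed
qed

lemma conc_fst[simp]: "fst (conc x y) = rsum (fst x) (fst y)" by (simp add: conc_def)
lemma conc_lab_l[simp]: "snd (conc x y) (sl i) = snd x i" by (simp add: conc_def)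
lemma conc_lab_r[simp]: "snd (conc x y) (sr i) = snd y i" by (simp add: conc_def)

lemma wpow_mem[simp]: "(pe i b, pe j c) \<in> fst (wpow x \<alpha>) \<longleftrightarrow>
   i \<in> F x \<and> j \<in> F x \<and> b \<in> Field \<alpha> \<and> c \<in> Field \<alpha> \<and>
   ((b, c) \<in> \<alpha> \<and> b \<noteq> c \<or> b = c \<and> (i, j) \<in> fst x)"
  by (auto simp: wpow_def)
lemma wpow_lab[simp]: "snd (wpow x \<alpha>) (pe i b) = snd x i" by (simp add: wpow_def)

lemma sub_fst[simp]: "fst (sub x S) = Restr (fst x) S" by (simp add: sub_def)
lemma sub_snd[simp]: "snd (sub x S) = snd x" by (simp add: sub_def)

section \<open>Well-order basics\<close>

lemma wo_refl: "Well_order r \<Longrightarrow> a \<in> Field r \<Longrightarrow> (a, a) \<in> r"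
  unfolding well_order_on_def linear_order_on_def partial_order_on_def preorder_on_def refl_on_def by blast
lemma wo_trans: "Well_order r \<Longrightarrow> (a, b) \<in> r \<Longrightarrow> (b, c) \<in> r \<Longrightarrow> (a, c) \<in> r"
  unfolding well_order_on_def linear_order_on_def partial_order_on_def preorder_on_def trans_def by blast
lemma wo_antisym: "Well_order r \<Longrightarrow> (a, b) \<in> r \<Longrightarrow> (b, a) \<in> r \<Longrightarrow> a = b"
  unfolding well_order_on_def linear_order_on_def partial_order_on_def antisym_def by blast
lemma wo_Refl: "Well_order r \<Longrightarrow> Refl r"
  unfolding well_order_on_def linear_order_on_def partial_order_on_def preorder_on_def by blast
lemma wo_total: "Well_order r \<Longrightarrow> a \<in> Field r \<Longrightarrow> b \<in> Field r \<Longrightarrow> (a, b) \<in> r \<or> (b, a) \<in> r"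
proof (cases "a = b")
  case True assume "Well_order r" "a \<in> Field r" then show ?thesis using True wo_Refl refl_onD by fastforce
next
  case False
  assume w: "Well_order r" "a \<in> Field r" "b \<in> Field r"
  have "total_on (Field r) r" using w(1) unfolding well_order_on_def linear_order_on_def by blast
  then show ?thesis using False w unfolding total_on_def by blast
qed
lemma wo_min:
  assumes w: "Well_order r" and A: "A \<subseteq> Field r" "A \<noteq> {}"
  shows "\<exists>a\<in>A. \<forall>a'\<in>A. (a, a') \<in> r"
proof -
  have l: "Linear_order r" using w unfolding well_order_on_def by (rule conjunct1)
  have "\<forall>A \<subseteq> Field r. A \<noteq> {} \<longrightarrow> (\<exists>a \<in> A. \<forall>a' \<in> A. (a, a') \<in> r)"
    using Linear_order_Well_order_iff[OF l] w by (rule iffD1)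
  then show ?thesis using A by blast
qed

lemma wo_intro:
  assumes "\<forall>a\<in>Field r. (a,a) \<in> r" "trans r" "antisym r"
    "\<forall>a\<in>Field r. \<forall>b\<in>Field r. (a,b) \<in> r \<or> (b,a) \<in> r"
    "\<forall>A. A \<subseteq> Field r \<longrightarrow> A \<noteq> {} \<longrightarrow> (\<exists>a\<in>A. \<forall>a'\<in>A. (a,a') \<in> r)"
  shows "Well_order r"
proof -
  have "refl_on (Field r) r" using assms(1) unfolding refl_on_def by blast
  moreover have "total_on (Field r) r" using assms(4) unfolding total_on_def by blast
  moreover have "r \<subseteq> Field r \<times> Field r" by (auto intro: FieldI1 FieldI2)
  ultimately have l: "Linear_order r" unfolding linear_order_on_def partial_order_on_def preorder_on_def
    using assms(2,3) by blast
  show ?thesis using Linear_order_Well_order_iff[OF l] assms(5) by blast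
qed

lemma Field_Restr_wo: "Well_order r \<Longrightarrow> S \<subseteq> Field r \<Longrightarrow> Field (Restr r S) = S"
  using Refl_Field_Restr2 wo_Refl by blast

lemma wo_Restr: "Well_order r \<Longrightarrow> Well_order (Restr r S)"
  by (rule Well_order_Restr)

lemma wo_infl:
  assumes wo: "Well_order r"
    and hF: "\<And>a. a \<in> Field r \<Longrightarrow> h a \<in> Field r"
    and hm: "\<And>a b. a \<in> Field r \<Longrightarrow> b \<in> Field r \<Longrightarrow> (a, b) \<in> r \<Longrightarrow> a \<noteq> b \<Longrightarrow> (h a, h b) \<in> r \<and> h a \<noteq> h b"
    and a: "a \<in> Field r"
  shows "(a, h a) \<in> r"
proof (rule ccontr)
  assume na: "(a, h a) \<notin> r"
  define A where "A = {a\<in>Field r. (a, h a) \<notin> r}"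
  have "A \<subseteq> Field r" "A \<noteq> {}" using a na A_def by auto
  then obtain m where m: "m \<in> A" "\<forall>a'\<in>A. (m, a') \<in> r" using wo_min[OF wo] by blast
  have mF: "m \<in> Field r" and mh: "(m, h m) \<notin> r" using m A_def by auto
  have hmF: "h m \<in> Field r" using hF mF by auto
  have 1: "(h m, m) \<in> r" "h m \<noteq> m" using wo_total[OF wo mF hmF] mh wo_refl[OF wo mF] by auto
  have 2: "(h (h m), h m) \<in> r" "h (h m) \<noteq> h m" using hm[OF hmF mF 1] by auto
  have "(h m, h (h m)) \<notin> r" using 2 wo_antisym[OF wo] by blast
  then have "h m \<in> A" using A_def hmF by auto
  then have "(m, h m) \<in> r" using m by auto
  then show False using mh by simp
qed

section \<open>Isomorphisms\<close>

definition wisof :: "(nat \<Rightarrow> nat) \<Rightarrow> 'a word \<Rightarrow> 'a word \<Rightarrow> bool" where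
  "wisof f x y \<longleftrightarrow> bij_betw f (F x) (F y)
     \<and> (\<forall>i\<in>F x. \<forall>j\<in>F x. (i, j) \<in> fst x \<longleftrightarrow> (f i, f j) \<in> fst y)
     \<and> (\<forall>i\<in>F x. snd y (f i) = snd x i)"

lemma word_iso_wisof: "word_iso x y \<longleftrightarrow> (\<exists>f. wisof f x y)"
  unfolding word_iso_def wisof_def by blast

lemma wisof_id: "wisof id x x" unfolding wisof_def by auto

lemma word_iso_refl[simp]: "word_iso x x" using wisof_id word_iso_wisof by blast

lemma wisof_inv:
  assumes "wisof f x y" shows "wisof (inv_into (F x) f) y x"
proof -
  let ?g = "inv_into (F x) f"
  have b: "bij_betw f (F x) (F y)" using assms wisof_def by blast
  have bg: "bij_betw ?g (F y) (F x)" using b bij_betw_inv_into by blast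
  have fg: "\<And>a. a \<in> F y \<Longrightarrow> f (?g a) = a" using b by (meson bij_betw_inv_into_right)
  have gF: "\<And>a. a \<in> F y \<Longrightarrow> ?g a \<in> F x" using bg bij_betwE by blast
  show ?thesis unfolding wisof_def
  proof (intro conjI ballI bg)
    fix i j assume "i \<in> F y" "j \<in> F y"
    then show "(i, j) \<in> fst y \<longleftrightarrow> (?g i, ?g j) \<in> fst x"
      using assms gF fg unfolding wisof_def by metis
  next
    fix i assume "i \<in> F y" then show "snd x (?g i) = snd y i"
      using assms gF fg unfolding wisof_def by metis
  qed
qed

lemma word_iso_sym: "word_iso x y \<Longrightarrow> word_iso y x"
  using wisof_inv word_iso_wisof by blast

lemma wisof_comp: "wisof f x y \<Longrightarrow> wisof g y z \<Longrightarrow> wisof (g \<circ> f) x z"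
  unfolding wisof_def
  by (auto simp: bij_betw_trans bij_betwE)

lemma word_iso_trans[trans]: "word_iso x y \<Longrightarrow> word_iso y z \<Longrightarrow> word_iso x z"
  unfolding word_iso_wisof using wisof_comp by blast


lemma wo_rsum:
  assumes r: "Well_order r" and s: "Well_order s"
  shows "Well_order (rsum r s)"
proof (rule wo_intro)
  show "\<forall>a\<in>Field (rsum r s). (a, a) \<in> rsum r s"
    unfolding Field_rsum using wo_refl[OF r] wo_refl[OF s] by auto
next
  show "trans (rsum r s)" unfolding trans_def
  proof (intro allI impI)
    fix a b c assume ab: "(a, b) \<in> rsum r s" and bc: "(b, c) \<in> rsum r s"
    show "(a, c) \<in> rsum r s"
      apply (cases a rule: nat_cases_sum; cases b rule: nat_cases_sum; cases c rule: nat_cases_sum)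
      using ab bc wo_trans[OF r] wo_trans[OF s] by (auto intro: FieldI1 FieldI2)
  qed
next
  show "antisym (rsum r s)" unfolding antisym_def
  proof (intro allI impI)
    fix a b assume ab: "(a, b) \<in> rsum r s" and ba: "(b, a) \<in> rsum r s"
    show "a = b"
      apply (cases a rule: nat_cases_sum; cases b rule: nat_cases_sum)
      using ab ba wo_antisym[OF r] wo_antisym[OF s] by auto
  qed
next
  show "\<forall>a\<in>Field (rsum r s). \<forall>b\<in>Field (rsum r s). (a, b) \<in> rsum r s \<or> (b, a) \<in> rsum r s"
    unfolding Field_rsum using wo_total[OF r] wo_total[OF s] by auto blast+
next
  show "\<forall>A. A \<subseteq> Field (rsum r s) \<longrightarrow> A \<noteq> {} \<longrightarrow> (\<exists>a\<in>A. \<forall>a'\<in>A. (a, a') \<in> rsum r s)"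
  proof (intro allI impI)
    fix A assume A: "A \<subseteq> Field (rsum r s)" "A \<noteq> {}"
    show "\<exists>a\<in>A. \<forall>a'\<in>A. (a, a') \<in> rsum r s"
    proof (cases "{i. sl i \<in> A} = {}")
      case False
      have "{i. sl i \<in> A} \<subseteq> Field r" using A(1) unfolding Field_rsum by auto
      then obtain m where m: "m \<in> {i. sl i \<in> A}" "\<forall>a'\<in>{i. sl i \<in> A}. (m, a') \<in> r"
        using wo_min[OF r] False by blast
      have mF: "m \<in> Field r" using m(2) m(1) by (auto intro: FieldI1)
      show ?thesis
      proof (intro bexI ballI)
        show "sl m \<in> A" using m by auto
      next
        fix a' assume a': "a' \<in> A"
        then have "a' \<in> sl ` Field r \<union> sr ` Field s" using A(1) Field_rsum by auto
        then show "(sl m, a') \<in> rsum r s" using m a' mF by auto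
      qed
    next
      case True
      then have "A \<subseteq> sr ` Field s" using A(1) unfolding Field_rsum by auto
      then have sub: "{j. sr j \<in> A} \<subseteq> Field s" and ne: "{j. sr j \<in> A} \<noteq> {}" using A(2) by auto
      then obtain m where m: "m \<in> {j. sr j \<in> A}" "\<forall>a'\<in>{j. sr j \<in> A}. (m, a') \<in> s"
        using wo_min[OF s] by blast
      show ?thesis
      proof (intro bexI ballI)
        show "sr m \<in> A" using m by auto
      next
        fix a' assume a': "a' \<in> A"
        then obtain j where "a' = sr j" "sr j \<in> A" using \<open>A \<subseteq> sr ` Field s\<close> by auto
        then show "(sr m, a') \<in> rsum r s" using m by auto
      qed
    qed
  qed
qed

lemma Field_wpow:
  assumes x: "Well_order (fst x)" and a: "Well_order \<alpha>"
  shows "F (wpow x \<alpha>) = {pe i b | i b. i \<in> F x \<and> b \<in> Field \<alpha>}"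
proof (rule set_eqI)
  fix n show "n \<in> F (wpow x \<alpha>) \<longleftrightarrow> n \<in> {pe i b | i b. i \<in> F x \<and> b \<in> Field \<alpha>}"
  proof
    assume "n \<in> F (wpow x \<alpha>)"
    then obtain m where "(n, m) \<in> fst (wpow x \<alpha>) \<or> (m, n) \<in> fst (wpow x \<alpha>)" unfolding Field_def by blast
    then show "n \<in> {pe i b | i b. i \<in> F x \<and> b \<in> Field \<alpha>}"
      by (cases n rule: nat_cases_prod; cases m rule: nat_cases_prod) auto
  next
    assume "n \<in> {pe i b | i b. i \<in> F x \<and> b \<in> Field \<alpha>}"
    then obtain i b where "n = pe i b" "i \<in> F x" "b \<in> Field \<alpha>" by blast
    then have "(n, n) \<in> fst (wpow x \<alpha>)" using wo_refl[OF x] by auto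
    then show "n \<in> F (wpow x \<alpha>)" by (rule FieldI1)
  qed
qed

lemma pe_in_Field_wpow[simp]:
  "Well_order (fst x) \<Longrightarrow> Well_order \<alpha> \<Longrightarrow> pe i b \<in> F (wpow x \<alpha>) \<longleftrightarrow> i \<in> F x \<and> b \<in> Field \<alpha>"
  by (auto simp: Field_wpow)

lemma wo_wpow:
  assumes x: "Well_order (fst x)" and a: "Well_order \<alpha>"
  shows "Well_order (fst (wpow x \<alpha>))"
proof (rule wo_intro)
  show "\<forall>n\<in>F (wpow x \<alpha>). (n, n) \<in> fst (wpow x \<alpha>)"
    unfolding Field_wpow[OF x a] using wo_refl[OF x] by auto
next
  show "trans (fst (wpow x \<alpha>))" unfolding trans_def
  proof (intro allI impI)
    fix n m k assume nm: "(n, m) \<in> fst (wpow x \<alpha>)" and mk: "(m, k) \<in> fst (wpow x \<alpha>)"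
    obtain i b where n: "n = pe i b" by (rule nat_cases_prod)
    obtain j c where m: "m = pe j c" by (rule nat_cases_prod)
    obtain l d where k: "k = pe l d" by (rule nat_cases_prod)
    have 1: "i \<in> F x" "j \<in> F x" "b \<in> Field \<alpha>" "c \<in> Field \<alpha>" "(b, c) \<in> \<alpha> \<and> b \<noteq> c \<or> b = c \<and> (i, j) \<in> fst x"
      using nm n m by auto
    have 2: "l \<in> F x" "d \<in> Field \<alpha>" "(c, d) \<in> \<alpha> \<and> c \<noteq> d \<or> c = d \<and> (j, l) \<in> fst x"
      using mk m k by auto
    have "(b, d) \<in> \<alpha> \<and> b \<noteq> d \<or> b = d \<and> (i, l) \<in> fst x"
      using 1(5) 2(3) wo_trans[OF a, of b c d] wo_antisym[OF a, of b c] wo_trans[OF x, of i j l] by auto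
    then show "(n, k) \<in> fst (wpow x \<alpha>)" using n k 1 2 by auto
  qed
next
  show "antisym (fst (wpow x \<alpha>))" unfolding antisym_def
  proof (intro allI impI)
    fix n m assume nm: "(n, m) \<in> fst (wpow x \<alpha>)" and mn: "(m, n) \<in> fst (wpow x \<alpha>)"
    obtain i b where n: "n = pe i b" by (rule nat_cases_prod)
    obtain j c where m: "m = pe j c" by (rule nat_cases_prod)
    show "n = m" using nm mn n m wo_antisym[OF a, of b c] wo_antisym[OF x, of i j] by auto
  qed
next
  show "\<forall>n\<in>F (wpow x \<alpha>). \<forall>m\<in>F (wpow x \<alpha>). (n, m) \<in> fst (wpow x \<alpha>) \<or> (m, n) \<in> fst (wpow x \<alpha>)"
  proof (intro ballI)
    fix n m assume "n \<in> F (wpow x \<alpha>)" "m \<in> F (wpow x \<alpha>)"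
    then obtain i b j c where n: "n = pe i b" "i \<in> F x" "b \<in> Field \<alpha>" and m: "m = pe j c" "j \<in> F x" "c \<in> Field \<alpha>"
      unfolding Field_wpow[OF x a] by blast
    show "(n, m) \<in> fst (wpow x \<alpha>) \<or> (m, n) \<in> fst (wpow x \<alpha>)"
      using n m wo_total[OF a n(3) m(3)] wo_total[OF x n(2) m(2)] by auto
  qed
next
  show "\<forall>A. A \<subseteq> F (wpow x \<alpha>) \<longrightarrow> A \<noteq> {} \<longrightarrow> (\<exists>a\<in>A. \<forall>a'\<in>A. (a, a') \<in> fst (wpow x \<alpha>))"
  proof (intro allI impI)
    fix A assume A: "A \<subseteq> F (wpow x \<alpha>)" "A \<noteq> {}"
    define B where "B = {b. \<exists>i. pe i b \<in> A}"
    have AF: "\<And>n. n \<in> A \<Longrightarrow> \<exists>i b. n = pe i b \<and> i \<in> F x \<and> b \<in> Field \<alpha>"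
      using A(1) unfolding Field_wpow[OF x a] by blast
    have "B \<subseteq> Field \<alpha>" unfolding B_def using AF by fastforce
    moreover have "B \<noteq> {}" unfolding B_def using A(2) AF by fastforce
    ultimately obtain b0 where b0: "b0 \<in> B" "\<forall>b\<in>B. (b0, b) \<in> \<alpha>" using wo_min[OF a] by blast
    define I where "I = {i. pe i b0 \<in> A}"
    have "I \<subseteq> F x" unfolding I_def using AF by fastforce
    moreover have "I \<noteq> {}" using b0(1) unfolding I_def B_def by blast
    ultimately obtain i0 where i0: "i0 \<in> I" "\<forall>i\<in>I. (i0, i) \<in> fst x" using wo_min[OF x] by blast
    show "\<exists>a\<in>A. \<forall>a'\<in>A. (a, a') \<in> fst (wpow x \<alpha>)"
    proof (intro bexI ballI)
      show "pe i0 b0 \<in> A" using i0 I_def by auto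
      fix a' assume "a' \<in> A"
      then obtain i b where ib: "a' = pe i b" "i \<in> F x" "b \<in> Field \<alpha>" "pe i b \<in> A" using AF by blast
      have "b \<in> B" using ib B_def by blast
      then have 1: "(b0, b) \<in> \<alpha>" using b0 by blast
      have i0F: "i0 \<in> F x" "b0 \<in> Field \<alpha>" using AF \<open>pe i0 b0 \<in> A\<close> by fastforce+
      show "(pe i0 b0, a') \<in> fst (wpow x \<alpha>)"
      proof (cases "b = b0")
        case True
        then have "i \<in> I" using ib I_def by simp
        then show ?thesis using i0 ib True i0F by auto
      next
        case False then show ?thesis using ib 1 i0F by auto
      qed
    qed
  qed
qed

lemma Field_sub: "Well_order (fst x) \<Longrightarrow> S \<subseteq> F x \<Longrightarrow> F (sub x S) = S"
  by (simp add: Field_Restr_wo)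

lemma wo_sub: "Well_order (fst x) \<Longrightarrow> Well_order (fst (sub x S))"
  by (simp add: wo_Restr)

lemma sub_Field[simp]: "sub x (F x) = x"
  unfolding sub_def by (simp add: Restr_Field)

lemma sub_sub: "sub (sub x S) T = sub x (S \<inter> T)"
  unfolding sub_def by auto

lemma wisof_sub:
  assumes f: "wisof f x y" and x: "Well_order (fst x)" and S: "S \<subseteq> F x"
  shows "wisof f (sub x S) (sub y (f ` S))"
proof -
  have b: "bij_betw f (F x) (F y)" using f wisof_def by blast
  have o: "\<And>i j. i \<in> F x \<Longrightarrow> j \<in> F x \<Longrightarrow> (i, j) \<in> fst x \<longleftrightarrow> (f i, f j) \<in> fst y"
    using f wisof_def by blast
  have FS: "F (sub x S) = S" using Field_sub[OF x S] .
  have FS2: "F (sub y (f ` S)) = f ` S"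
  proof
    show "F (sub y (f ` S)) \<subseteq> f ` S" by (auto simp: Field_def)
    show "f ` S \<subseteq> F (sub y (f ` S))"
    proof
      fix n assume "n \<in> f ` S"
      then obtain i where i: "i \<in> S" "n = f i" by blast
      have "(i, i) \<in> fst x" using wo_refl[OF x] S i by auto
      then have "(f i, f i) \<in> fst y" using o S i by auto
      then have "(n, n) \<in> fst (sub y (f ` S))" using i by auto
      then show "n \<in> F (sub y (f ` S))" by (rule FieldI1)
    qed
  qed
  show ?thesis unfolding wisof_def FS FS2
  proof (intro conjI ballI)
    show "bij_betw f S (f ` S)" using b S by (meson bij_betw_subset)
  next
    fix i j assume "i \<in> S" "j \<in> S"
    then show "(i, j) \<in> fst (sub x S) \<longleftrightarrow> (f i, f j) \<in> fst (sub y (f ` S))"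
      using o S by auto
  next
    fix i assume "i \<in> S" then show "snd (sub y (f ` S)) (f i) = snd (sub x S) i"
      using f S unfolding wisof_def by auto
  qed
qed

lemma word_iso_sub:
  "wisof f x y \<Longrightarrow> Well_order (fst x) \<Longrightarrow> S \<subseteq> F x \<Longrightarrow> word_iso (sub x S) (sub y (f ` S))"
  using wisof_sub word_iso_wisof by blast

definition cmap :: "(nat \<Rightarrow> nat) \<Rightarrow> (nat \<Rightarrow> nat) \<Rightarrow> nat \<Rightarrow> nat" where
  "cmap f g n = (case sum_decode n of Inl i \<Rightarrow> sl (f i) | Inr j \<Rightarrow> sr (g j))"

lemma cmap_l[simp]: "cmap f g (sl i) = sl (f i)" by (simp add: cmap_def)
lemma cmap_r[simp]: "cmap f g (sr i) = sr (g i)" by (simp add: cmap_def)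

lemma mem_slsr: "n \<in> sl ` A \<union> sr ` B \<Longrightarrow> (\<exists>i. i \<in> A \<and> n = sl i) \<or> (\<exists>j. j \<in> B \<and> n = sr j)"
  by blast

lemma bij_cmap:
  assumes bf: "bij_betw f A A'" and bg: "bij_betw g B B'"
  shows "bij_betw (cmap f g) (sl ` A \<union> sr ` B) (sl ` A' \<union> sr ` B')"
  unfolding bij_betw_def
proof
  have fi: "inj_on f A" and gi: "inj_on g B" using bf bg bij_betw_imp_inj_on by blast+
  show "inj_on (cmap f g) (sl ` A \<union> sr ` B)"
  proof (rule inj_onI)
    fix n m assume n: "n \<in> sl ` A \<union> sr ` B" and m: "m \<in> sl ` A \<union> sr ` B" and e: "cmap f g n = cmap f g m"
    show "n = m"
    proof (cases "\<exists>i. i \<in> A \<and> n = sl i")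
      case True
      then obtain i where i: "i \<in> A" "n = sl i" by blast
      show ?thesis
      proof (cases "\<exists>j. j \<in> A \<and> m = sl j")
        case True
        then obtain j where j: "j \<in> A" "m = sl j" by blast
        have "f i = f j" using e i j by simp
        then show "n = m" using inj_onD[OF fi _ i(1) j(1)] i j by simp
      next
        case False
        then obtain j where j: "j \<in> B" "m = sr j" using mem_slsr[OF m] by blast
        show ?thesis using e i j by simp
      qed
    next
      case False
      then obtain i where i: "i \<in> B" "n = sr i" using mem_slsr[OF n] by blast
      show ?thesis
      proof (cases "\<exists>j. j \<in> A \<and> m = sl j")
        case True
        then obtain j where j: "j \<in> A" "m = sl j" by blast
        show ?thesis using e i j by simp
      next
        case False
        then obtain j where j: "j \<in> B" "m = sr j" using mem_slsr[OF m] by blast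
        have "g i = g j" using e i j by simp
        then show "n = m" using inj_onD[OF gi _ i(1) j(1)] i j by simp
      qed
    qed
  qed
  have e: "f ` A = A'" "g ` B = B'" using bf bg bij_betw_imp_surj_on by blast+
  have "cmap f g ` (sl ` A \<union> sr ` B) = sl ` (f ` A) \<union> sr ` (g ` B)"
    by (simp add: image_Un image_image)
  then show "cmap f g ` (sl ` A \<union> sr ` B) = sl ` A' \<union> sr ` B'" using e by simp
qed

lemma wisof_conc:
  assumes f: "wisof f x x'" and g: "wisof g y y'"
  shows "wisof (cmap f g) (conc x y) (conc x' y')"
proof -
  have bf: "bij_betw f (F x) (F x')" and bg: "bij_betw g (F y) (F y')" using f g wisof_def by blast+
  have fF: "\<And>i. i \<in> F x \<Longrightarrow> f i \<in> F x'" using bf bij_betwE by blast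
  have gF: "\<And>i. i \<in> F y \<Longrightarrow> g i \<in> F y'" using bg bij_betwE by blast
  have fo: "\<And>i j. i \<in> F x \<Longrightarrow> j \<in> F x \<Longrightarrow> (i, j) \<in> fst x \<longleftrightarrow> (f i, f j) \<in> fst x'"
    using f wisof_def by blast
  have go: "\<And>i j. i \<in> F y \<Longrightarrow> j \<in> F y \<Longrightarrow> (i, j) \<in> fst y \<longleftrightarrow> (g i, g j) \<in> fst y'"
    using g wisof_def by blast
  have fl: "\<And>i. i \<in> F x \<Longrightarrow> snd x' (f i) = snd x i" using f wisof_def by blast
  have gl: "\<And>i. i \<in> F y \<Longrightarrow> snd y' (g i) = snd y i" using g wisof_def by blast
  show ?thesis unfolding wisof_def conc_fst Field_rsum
  proof (intro conjI ballI)
    show "bij_betw (cmap f g) (sl ` F x \<union> sr ` F y) (sl ` F x' \<union> sr ` F y')" using bij_cmap bf bg by blast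
  next
    fix n m assume n: "n \<in> sl ` F x \<union> sr ` F y" and m: "m \<in> sl ` F x \<union> sr ` F y"
    from mem_slsr[OF n] mem_slsr[OF m] show "(n, m) \<in> rsum (fst x) (fst y) \<longleftrightarrow> (cmap f g n, cmap f g m) \<in> rsum (fst x') (fst y')"
      using fo go fF gF by auto
  next
    fix n assume n: "n \<in> sl ` F x \<union> sr ` F y"
    from mem_slsr[OF n] show "snd (conc x' y') (cmap f g n) = snd (conc x y) n"
      using fl gl by auto
  qed
qed

lemma word_iso_conc: "word_iso x x' \<Longrightarrow> word_iso y y' \<Longrightarrow> word_iso (conc x y) (conc x' y')"
  unfolding word_iso_wisof using wisof_conc by blast

lemma word_iso_conc_l: "word_iso x x' \<Longrightarrow> word_iso (conc x y) (conc x' y)"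
  using word_iso_conc word_iso_refl by blast
lemma word_iso_conc_r: "word_iso y y' \<Longrightarrow> word_iso (conc x y) (conc x y')"
  using word_iso_conc word_iso_refl by blast

definition amap :: "nat \<Rightarrow> nat" where
  "amap n = (case sum_decode n of Inl n' \<Rightarrow> (case sum_decode n' of Inl i \<Rightarrow> sl i | Inr j \<Rightarrow> sr (sl j)) | Inr k \<Rightarrow> sr (sr k))"

lemma amap_simps[simp]: "amap (sl (sl i)) = sl i" "amap (sl (sr j)) = sr (sl j)" "amap (sr k) = sr (sr k)"
  by (simp_all add: amap_def)

lemma conc_assoc: "word_iso (conc (conc x y) z) (conc x (conc y z))"
  unfolding word_iso_wisof
proof (intro exI)
  show "wisof amap (conc (conc x y) z) (conc x (conc y z))"
    unfolding wisof_def conc_fst Field_rsum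
  proof (intro conjI ballI)
    show "bij_betw amap (sl ` (sl ` F x \<union> sr ` F y) \<union> sr ` F z) (sl ` F x \<union> sr ` (sl ` F y \<union> sr ` F z))"
      unfolding bij_betw_def
    proof
      show "inj_on amap (sl ` (sl ` F x \<union> sr ` F y) \<union> sr ` F z)" by (rule inj_onI) auto
      show "amap ` (sl ` (sl ` F x \<union> sr ` F y) \<union> sr ` F z) = sl ` F x \<union> sr ` (sl ` F y \<union> sr ` F z)"
        by (auto simp: image_image image_Un)
    qed
  next
    fix n m assume "n \<in> sl ` (sl ` F x \<union> sr ` F y) \<union> sr ` F z" "m \<in> sl ` (sl ` F x \<union> sr ` F y) \<union> sr ` F z"
    then show "(n, m) \<in> rsum (rsum (fst x) (fst y)) (fst z) \<longleftrightarrow> (amap n, amap m) \<in> rsum (fst x) (rsum (fst y) (fst z))"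
      by (auto simp: Field_rsum)
  next
    fix n assume "n \<in> sl ` (sl ` F x \<union> sr ` F y) \<union> sr ` F z"
    then show "snd (conc x (conc y z)) (amap n) = snd (conc (conc x y) z) n" by auto
  qed
qed

definition ew :: "'a word" where "ew = ({}, \<lambda>_. undefined)"

lemma ew_fst[simp]: "fst ew = {}" by (simp add: ew_def)

lemma wo_empty: "Well_order {}"
  by (rule wo_intro) (auto simp: trans_def antisym_def)

lemma is_word_ew: "is_word ew" by (simp add: is_word_def wo_empty)

lemma iso_empty: "F x = {} \<Longrightarrow> F y = {} \<Longrightarrow> word_iso x y"
  unfolding word_iso_def by (auto simp: bij_betw_def)

lemma conc_ew_r: "word_iso (conc x ew) x"
  unfolding word_iso_wisof
proof (intro exI)
  show "wisof (\<lambda>n. case sum_decode n of Inl i \<Rightarrow> i | Inr j \<Rightarrow> j) (conc x ew) x"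
    unfolding wisof_def conc_fst Field_rsum
    by (auto simp: bij_betw_def inj_on_def image_image)
qed

lemma conc_ew_l: "word_iso (conc ew x) x"
  unfolding word_iso_wisof
proof (intro exI)
  show "wisof (\<lambda>n. case sum_decode n of Inl i \<Rightarrow> i | Inr j \<Rightarrow> j) (conc ew x) x"
    unfolding wisof_def conc_fst Field_rsum
    by (auto simp: bij_betw_def inj_on_def image_image)
qed

lemma conc_empty_l: "F e = {} \<Longrightarrow> word_iso (conc e x) x"
proof -
  assume "F e = {}"
  then have "word_iso e ew" by (simp add: iso_empty)
  then have "word_iso (conc e x) (conc ew x)" by (rule word_iso_conc_l)
  then show ?thesis using conc_ew_l word_iso_trans by blast
qed

lemma conc_empty_r: "F e = {} \<Longrightarrow> word_iso (conc x e) x"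
proof -
  assume "F e = {}"
  then have "word_iso e ew" by (simp add: iso_empty)
  then have "word_iso (conc x e) (conc x ew)" by (rule word_iso_conc_r)
  then show ?thesis using conc_ew_r word_iso_trans by blast
qed




definition gmap :: "nat \<Rightarrow> nat" where
  "gmap n = (case sum_decode n of Inl i \<Rightarrow> i | Inr j \<Rightarrow> j)"
lemma gmap_simps[simp]: "gmap (sl i) = i" "gmap (sr i) = i" by (simp_all add: gmap_def)

lemma split_iso:
  assumes X: "Well_order (fst X)" and S1: "S1 \<subseteq> F X" and S2: "S2 \<subseteq> F X"
    and lt: "\<And>a b. a \<in> S1 \<Longrightarrow> b \<in> S2 \<Longrightarrow> (a, b) \<in> fst X \<and> a \<noteq> b"
  shows "word_iso (conc (sub X S1) (sub X S2)) (sub X (S1 \<union> S2))"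
  unfolding word_iso_wisof
proof (intro exI)
  have F1: "F (conc (sub X S1) (sub X S2)) = sl ` S1 \<union> sr ` S2"
    using Field_rsum Field_sub[OF X S1] Field_sub[OF X S2] by simp
  have F2: "F (sub X (S1 \<union> S2)) = S1 \<union> S2" using Field_sub[OF X] S1 S2 by simp
  show "wisof gmap (conc (sub X S1) (sub X S2)) (sub X (S1 \<union> S2))"
    unfolding wisof_def F1 F2
  proof (intro conjI ballI)
    show "bij_betw gmap (sl ` S1 \<union> sr ` S2) (S1 \<union> S2)" unfolding bij_betw_def
    proof
      show "inj_on gmap (sl ` S1 \<union> sr ` S2)"
      proof (rule inj_onI)
        fix n m assume n: "n \<in> sl ` S1 \<union> sr ` S2" and m: "m \<in> sl ` S1 \<union> sr ` S2" and e: "gmap n = gmap m"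
        from mem_slsr[OF n] mem_slsr[OF m] show "n = m" using e lt by auto (use lt in blast)+
      qed
      show "gmap ` (sl ` S1 \<union> sr ` S2) = S1 \<union> S2" by (simp add: image_Un image_image)
    qed
  next
    fix n m assume n: "n \<in> sl ` S1 \<union> sr ` S2" and m: "m \<in> sl ` S1 \<union> sr ` S2"
    have ls: "\<And>a b. a \<in> S1 \<Longrightarrow> b \<in> S2 \<Longrightarrow> (b, a) \<notin> fst X"
      using lt wo_antisym[OF X] by blast
    from mem_slsr[OF n] mem_slsr[OF m]
    show "(n, m) \<in> fst (conc (sub X S1) (sub X S2)) \<longleftrightarrow> (gmap n, gmap m) \<in> fst (sub X (S1 \<union> S2))"
      using Field_sub[OF X S1] Field_sub[OF X S2] lt ls by auto
  next
    fix n assume n: "n \<in> sl ` S1 \<union> sr ` S2"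
    from mem_slsr[OF n] show "snd (sub X (S1 \<union> S2)) (gmap n) = snd (conc (sub X S1) (sub X S2)) n"
      by auto
  qed
qed

lemma sub_conc:
  assumes X: "Well_order (fst X)" and Y: "Well_order (fst Y)" and S: "S \<subseteq> F X" and T: "T \<subseteq> F Y"
  shows "sub (conc X Y) (sl ` S \<union> sr ` T) = conc (sub X S) (sub Y T)"
proof -
  have FS: "Field (Restr (fst X) S) = S" using Field_Restr_wo[OF X S] .
  have FT: "Field (Restr (fst Y) T) = T" using Field_Restr_wo[OF Y T] .
  have 1: "Restr (rsum (fst X) (fst Y)) (sl ` S \<union> sr ` T) = rsum (Restr (fst X) S) (Restr (fst Y) T)"
  proof (rule set_eqI)
    fix p :: "nat \<times> nat"
    obtain a b where p: "p = (a, b)" by fastforce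
    show "p \<in> Restr (rsum (fst X) (fst Y)) (sl ` S \<union> sr ` T) \<longleftrightarrow> p \<in> rsum (Restr (fst X) S) (Restr (fst Y) T)"
      unfolding p
      by (cases a rule: nat_cases_sum; cases b rule: nat_cases_sum) (use S T FS FT in auto)
  qed
  show ?thesis unfolding sub_def conc_def using 1 by (simp add: fun_eq_iff split: sum.split)
qed

lemma sub_wpow:
  assumes x: "Well_order (fst x)" and a: "Well_order \<alpha>" and B: "B \<subseteq> Field \<alpha>"
  shows "sub (wpow x \<alpha>) {pe i b | i b. i \<in> F x \<and> b \<in> B} = wpow x (Restr \<alpha> B)"
proof -
  have FB: "Field (Restr \<alpha> B) = B" using Field_Restr_wo[OF a B] .
  have 1: "Restr (fst (wpow x \<alpha>)) {pe i b | i b. i \<in> F x \<and> b \<in> B} = fst (wpow x (Restr \<alpha> B))"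
  proof (rule set_eqI)
    fix p :: "nat \<times> nat"
    obtain n m where p: "p = (n, m)" by fastforce
    obtain i b where n: "n = pe i b" by (rule nat_cases_prod)
    obtain j c where m: "m = pe j c" by (rule nat_cases_prod)
    show "p \<in> Restr (fst (wpow x \<alpha>)) {pe i b | i b. i \<in> F x \<and> b \<in> B} \<longleftrightarrow> p \<in> fst (wpow x (Restr \<alpha> B))"
      unfolding p n m using FB B by auto
  qed
  show ?thesis unfolding sub_def using 1 by (simp add: wpow_def)
qed

lemma copy_iso:
  assumes x: "Well_order (fst x)" and a: "Well_order \<alpha>" and S: "S \<subseteq> F x" and e: "e \<in> Field \<alpha>"
  shows "word_iso (sub (wpow x \<alpha>) ((\<lambda>i. pe i e) ` S)) (sub x S)"
  unfolding word_iso_wisof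
proof (intro exI)
  have P: "(\<lambda>i. pe i e) ` S \<subseteq> F (wpow x \<alpha>)" using S e x a by auto
  have F1: "F (sub (wpow x \<alpha>) ((\<lambda>i. pe i e) ` S)) = (\<lambda>i. pe i e) ` S"
    using Field_sub[OF wo_wpow[OF x a] P] .
  have F2: "F (sub x S) = S" using Field_sub[OF x S] .
  show "wisof (\<lambda>n. fst (prod_decode n)) (sub (wpow x \<alpha>) ((\<lambda>i. pe i e) ` S)) (sub x S)"
    unfolding wisof_def F1 F2
  proof (intro conjI ballI)
    show "bij_betw (\<lambda>n. fst (prod_decode n)) ((\<lambda>i. pe i e) ` S) S"
      unfolding bij_betw_def by (auto simp: inj_on_def image_image)
  next
    fix n m assume "n \<in> (\<lambda>i. pe i e) ` S" "m \<in> (\<lambda>i. pe i e) ` S"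
    then show "(n, m) \<in> fst (sub (wpow x \<alpha>) ((\<lambda>i. pe i e) ` S)) \<longleftrightarrow>
        (fst (prod_decode n), fst (prod_decode m)) \<in> fst (sub x S)"
      using S e by auto
  next
    fix n assume "n \<in> (\<lambda>i. pe i e) ` S"
    then show "snd (sub x S) (fst (prod_decode n)) = snd (sub (wpow x \<alpha>) ((\<lambda>i. pe i e) ` S)) n"
      by auto
  qed
qed

lemma wpow_single:
  assumes x: "Well_order (fst x)" and a: "Well_order \<alpha>" and e: "e \<in> Field \<alpha>"
  shows "word_iso (wpow x (Restr \<alpha> {e})) x"
proof -
  have eS: "{e} \<subseteq> Field \<alpha>" using e by simp
  have "wpow x (Restr \<alpha> {e}) = sub (wpow x \<alpha>) {pe i b | i b. i \<in> F x \<and> b \<in> {e}}"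
    using sub_wpow[OF x a eS] by (rule sym)
  also have "{pe i b | i b. i \<in> F x \<and> b \<in> {e}} = (\<lambda>i. pe i e) ` F x" by auto
  finally have "wpow x (Restr \<alpha> {e}) = sub (wpow x \<alpha>) ((\<lambda>i. pe i e) ` F x)" .
  then show ?thesis using copy_iso[OF x a _ e, of "F x"] by simp
qed

lemma power_split:
  assumes x: "Well_order (fst x)" and a: "Well_order \<alpha>" and S1: "S1 \<subseteq> Field \<alpha>" and S2: "S2 \<subseteq> Field \<alpha>"
    and lt: "\<And>a b. a \<in> S1 \<Longrightarrow> b \<in> S2 \<Longrightarrow> (a, b) \<in> \<alpha> \<and> a \<noteq> b"
  shows "word_iso (conc (wpow x (Restr \<alpha> S1)) (wpow x (Restr \<alpha> S2))) (wpow x (Restr \<alpha> (S1 \<union> S2)))"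
proof -
  define P1 where "P1 = {pe i b | i b. i \<in> F x \<and> b \<in> S1}"
  define P2 where "P2 = {pe i b | i b. i \<in> F x \<and> b \<in> S2}"
  have W: "Well_order (fst (wpow x \<alpha>))" using wo_wpow[OF x a] .
  have P1F: "P1 \<subseteq> F (wpow x \<alpha>)" using S1 x a unfolding P1_def by auto
  have P2F: "P2 \<subseteq> F (wpow x \<alpha>)" using S2 x a unfolding P2_def by auto
  have "word_iso (conc (sub (wpow x \<alpha>) P1) (sub (wpow x \<alpha>) P2)) (sub (wpow x \<alpha>) (P1 \<union> P2))"
  proof (rule split_iso[OF W P1F P2F])
    fix p q assume "p \<in> P1" "q \<in> P2"
    then show "(p, q) \<in> fst (wpow x \<alpha>) \<and> p \<noteq> q" unfolding P1_def P2_def using lt S1 S2 by auto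
  qed
  moreover have "sub (wpow x \<alpha>) P1 = wpow x (Restr \<alpha> S1)" unfolding P1_def using sub_wpow[OF x a S1] .
  moreover have "sub (wpow x \<alpha>) P2 = wpow x (Restr \<alpha> S2)" unfolding P2_def using sub_wpow[OF x a S2] .
  moreover have "P1 \<union> P2 = {pe i b | i b. i \<in> F x \<and> b \<in> S1 \<union> S2}" unfolding P1_def P2_def by auto
  moreover have U: "S1 \<union> S2 \<subseteq> Field \<alpha>" using S1 S2 by simp
  moreover have "sub (wpow x \<alpha>) {pe i b | i b. i \<in> F x \<and> b \<in> S1 \<union> S2} = wpow x (Restr \<alpha> (S1 \<union> S2))"
    using sub_wpow[OF x a U] .
  ultimately show ?thesis by simp
qed

lemma wpow_exp_iso:
  assumes x: "Well_order (fst x)" and o: "\<alpha> =o \<alpha>'"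
  shows "word_iso (wpow x \<alpha>) (wpow x \<alpha>')"
  unfolding word_iso_wisof
proof -
  have a: "Well_order \<alpha>" and a': "Well_order \<alpha>'" using o unfolding ordIso_def by auto
  obtain f where f: "iso \<alpha> \<alpha>' f" using o unfolding ordIso_def by auto
  have bf: "bij_betw f (Field \<alpha>) (Field \<alpha>')" and fo: "\<And>b c. b \<in> Field \<alpha> \<Longrightarrow> c \<in> Field \<alpha> \<Longrightarrow> (b, c) \<in> \<alpha> \<longleftrightarrow> (f b, f c) \<in> \<alpha>'"
    using f unfolding iso_iff2 by blast+
  have fi: "inj_on f (Field \<alpha>)" using bf bij_betw_imp_inj_on by blast
  have fF: "\<And>b. b \<in> Field \<alpha> \<Longrightarrow> f b \<in> Field \<alpha>'" using bf bij_betwE by blast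
  have fs: "f ` Field \<alpha> = Field \<alpha>'" using bf bij_betw_imp_surj_on by blast
  define h where "h n = (case prod_decode n of (i, b) \<Rightarrow> pe i (f b))" for n
  have h[simp]: "h (pe i b) = pe i (f b)" for i b by (simp add: h_def)
  have "wisof h (wpow x \<alpha>) (wpow x \<alpha>')"
    unfolding wisof_def Field_wpow[OF x a] Field_wpow[OF x a']
  proof (intro conjI ballI)
    show "bij_betw h {pe i b |i b. i \<in> F x \<and> b \<in> Field \<alpha>} {pe i b |i b. i \<in> F x \<and> b \<in> Field \<alpha>'}"
      unfolding bij_betw_def
    proof
      show "inj_on h {pe i b |i b. i \<in> F x \<and> b \<in> Field \<alpha>}"
        by (rule inj_onI) (auto dest: inj_onD[OF fi])
      show "h ` {pe i b |i b. i \<in> F x \<and> b \<in> Field \<alpha>} = {pe i b |i b. i \<in> F x \<and> b \<in> Field \<alpha>'}"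
      proof
        show "h ` {pe i b |i b. i \<in> F x \<and> b \<in> Field \<alpha>} \<subseteq> {pe i b |i b. i \<in> F x \<and> b \<in> Field \<alpha>'}"
          using fF by auto
        show "{pe i b |i b. i \<in> F x \<and> b \<in> Field \<alpha>'} \<subseteq> h ` {pe i b |i b. i \<in> F x \<and> b \<in> Field \<alpha>}"
        proof
          fix n assume "n \<in> {pe i b |i b. i \<in> F x \<and> b \<in> Field \<alpha>'}"
          then obtain i b' where n: "n = pe i b'" "i \<in> F x" "b' \<in> Field \<alpha>'" by blast
          then obtain b where "b \<in> Field \<alpha>" "b' = f b" using fs by blast
          then show "n \<in> h ` {pe i b |i b. i \<in> F x \<and> b \<in> Field \<alpha>}" using n by force
        qed
      qed
    qed
  next
    fix n m assume n: "n \<in> {pe i b |i b. i \<in> F x \<and> b \<in> Field \<alpha>}" and m: "m \<in> {pe i b |i b. i \<in> F x \<and> b \<in> Field \<alpha>}"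
    then obtain i b j c where nm: "n = pe i b" "i \<in> F x" "b \<in> Field \<alpha>" "m = pe j c" "j \<in> F x" "c \<in> Field \<alpha>" by blast
    have "f b = f c \<longleftrightarrow> b = c" using inj_onD[OF fi] nm by blast
    then show "(n, m) \<in> fst (wpow x \<alpha>) \<longleftrightarrow> (h n, h m) \<in> fst (wpow x \<alpha>')"
      using nm fo fF by auto
  next
    fix n assume "n \<in> {pe i b |i b. i \<in> F x \<and> b \<in> Field \<alpha>}"
    then show "snd (wpow x \<alpha>') (h n) = snd (wpow x \<alpha>) n" by auto
  qed
  then show "\<exists>f. wisof f (wpow x \<alpha>) (wpow x \<alpha>')" by blast
qed

lemma wpow_base_iso:
  assumes x: "Well_order (fst x)" and x': "Well_order (fst x')" and a: "Well_order \<alpha>" and xi: "word_iso x x'"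
  shows "word_iso (wpow x \<alpha>) (wpow x' \<alpha>)"
  unfolding word_iso_wisof
proof -
  obtain f where f: "wisof f x x'" using xi word_iso_wisof by blast
  have bf: "bij_betw f (F x) (F x')" and fo: "\<And>b c. b \<in> F x \<Longrightarrow> c \<in> F x \<Longrightarrow> (b, c) \<in> fst x \<longleftrightarrow> (f b, f c) \<in> fst x'"
    and fl: "\<And>i. i \<in> F x \<Longrightarrow> snd x' (f i) = snd x i"
    using f unfolding wisof_def by blast+
  have fi: "inj_on f (F x)" using bf bij_betw_imp_inj_on by blast
  have fF: "\<And>b. b \<in> F x \<Longrightarrow> f b \<in> F x'" using bf bij_betwE by blast
  have fs: "f ` F x = F x'" using bf bij_betw_imp_surj_on by blast
  define h where "h n = (case prod_decode n of (i, b) \<Rightarrow> pe (f i) b)" for n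
  have h[simp]: "h (pe i b) = pe (f i) b" for i b by (simp add: h_def)
  have "wisof h (wpow x \<alpha>) (wpow x' \<alpha>)"
    unfolding wisof_def Field_wpow[OF x a] Field_wpow[OF x' a]
  proof (intro conjI ballI)
    show "bij_betw h {pe i b |i b. i \<in> F x \<and> b \<in> Field \<alpha>} {pe i b |i b. i \<in> F x' \<and> b \<in> Field \<alpha>}"
      unfolding bij_betw_def
    proof
      show "inj_on h {pe i b |i b. i \<in> F x \<and> b \<in> Field \<alpha>}"
        by (rule inj_onI) (auto dest: inj_onD[OF fi])
      show "h ` {pe i b |i b. i \<in> F x \<and> b \<in> Field \<alpha>} = {pe i b |i b. i \<in> F x' \<and> b \<in> Field \<alpha>}"
      proof
        show "h ` {pe i b |i b. i \<in> F x \<and> b \<in> Field \<alpha>} \<subseteq> {pe i b |i b. i \<in> F x' \<and> b \<in> Field \<alpha>}"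
          using fF by auto
        show "{pe i b |i b. i \<in> F x' \<and> b \<in> Field \<alpha>} \<subseteq> h ` {pe i b |i b. i \<in> F x \<and> b \<in> Field \<alpha>}"
        proof
          fix n assume "n \<in> {pe i b |i b. i \<in> F x' \<and> b \<in> Field \<alpha>}"
          then obtain i' b where n: "n = pe i' b" "i' \<in> F x'" "b \<in> Field \<alpha>" by blast
          then obtain i where "i \<in> F x" "i' = f i" using fs by blast
          then show "n \<in> h ` {pe i b |i b. i \<in> F x \<and> b \<in> Field \<alpha>}" using n by force
        qed
      qed
    qed
  next
    fix n m assume n: "n \<in> {pe i b |i b. i \<in> F x \<and> b \<in> Field \<alpha>}" and m: "m \<in> {pe i b |i b. i \<in> F x \<and> b \<in> Field \<alpha>}"
    then obtain i b j c where nm: "n = pe i b" "i \<in> F x" "b \<in> Field \<alpha>" "m = pe j c" "j \<in> F x" "c \<in> Field \<alpha>" by blast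
    then show "(n, m) \<in> fst (wpow x \<alpha>) \<longleftrightarrow> (h n, h m) \<in> fst (wpow x' \<alpha>)"
      using fo fF by auto
  next
    fix n assume "n \<in> {pe i b |i b. i \<in> F x \<and> b \<in> Field \<alpha>}"
    then show "snd (wpow x' \<alpha>) (h n) = snd (wpow x \<alpha>) n" using fl by auto
  qed
  then show "\<exists>f. wisof f (wpow x \<alpha>) (wpow x' \<alpha>)" by blast
qed

lemma ordIso_Restr_sl:
  assumes a: "Well_order \<alpha>" and b: "Well_order \<beta>"
  shows "\<alpha> =o Restr (rsum \<alpha> \<beta>) (sl ` Field \<alpha>)"
proof -
  have R: "Well_order (rsum \<alpha> \<beta>)" using wo_rsum[OF a b] .
  have S: "sl ` Field \<alpha> \<subseteq> Field (rsum \<alpha> \<beta>)" using Field_rsum by auto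
  have FR: "Field (Restr (rsum \<alpha> \<beta>) (sl ` Field \<alpha>)) = sl ` Field \<alpha>" using Field_Restr_wo[OF R S] .
  have "iso \<alpha> (Restr (rsum \<alpha> \<beta>) (sl ` Field \<alpha>)) sl"
    unfolding iso_iff2 FR by (auto simp: bij_betw_def inj_on_def)
  then show ?thesis unfolding ordIso_def using a wo_Restr[OF R] by blast
qed

lemma ordIso_Restr_sr:
  assumes a: "Well_order \<alpha>" and b: "Well_order \<beta>"
  shows "\<beta> =o Restr (rsum \<alpha> \<beta>) (sr ` Field \<beta>)"
proof -
  have R: "Well_order (rsum \<alpha> \<beta>)" using wo_rsum[OF a b] .
  have S: "sr ` Field \<beta> \<subseteq> Field (rsum \<alpha> \<beta>)" using Field_rsum by auto
  have FR: "Field (Restr (rsum \<alpha> \<beta>) (sr ` Field \<beta>)) = sr ` Field \<beta>" using Field_Restr_wo[OF R S] .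
  have "iso \<beta> (Restr (rsum \<alpha> \<beta>) (sr ` Field \<beta>)) sr"
    unfolding iso_iff2 FR by (auto simp: bij_betw_def inj_on_def)
  then show ?thesis unfolding ordIso_def using b wo_Restr[OF R] by blast
qed

lemma wpow_rsum:
  assumes x: "Well_order (fst x)" and a: "Well_order \<alpha>" and b: "Well_order \<beta>"
  shows "word_iso (conc (wpow x \<alpha>) (wpow x \<beta>)) (wpow x (rsum \<alpha> \<beta>))"
proof -
  let ?R = "rsum \<alpha> \<beta>"
  have R: "Well_order ?R" using wo_rsum[OF a b] .
  have 1: "word_iso (conc (wpow x (Restr ?R (sl ` Field \<alpha>))) (wpow x (Restr ?R (sr ` Field \<beta>))))
     (wpow x (Restr ?R (sl ` Field \<alpha> \<union> sr ` Field \<beta>)))"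
    by (rule power_split[OF x R]) (auto simp: Field_rsum)
  have 2: "Restr ?R (sl ` Field \<alpha> \<union> sr ` Field \<beta>) = ?R"
    using Restr_Field[of ?R] by (simp add: Field_rsum)
  have 3: "word_iso (wpow x \<alpha>) (wpow x (Restr ?R (sl ` Field \<alpha>)))"
    using wpow_exp_iso[OF x ordIso_Restr_sl[OF a b]] .
  have 4: "word_iso (wpow x \<beta>) (wpow x (Restr ?R (sr ` Field \<beta>)))"
    using wpow_exp_iso[OF x ordIso_Restr_sr[OF a b]] .
  have 5: "word_iso (conc (wpow x \<alpha>) (wpow x \<beta>)) (conc (wpow x (Restr ?R (sl ` Field \<alpha>))) (wpow x (Restr ?R (sr ` Field \<beta>))))"
    using word_iso_conc[OF 3 4] .
  show ?thesis using word_iso_trans[OF 5 1] 2 by simp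
qed

lemma wo_one: "Well_order ord_one"
  unfolding ord_one_def by (rule wo_intro) (auto simp: trans_def antisym_def Field_def)

lemma Field_one: "Field ord_one = {0}" unfolding ord_one_def Field_def by auto

lemma wpow_one:
  assumes x: "Well_order (fst x)" shows "word_iso (wpow x ord_one) x"
proof -
  have "Restr ord_one {0} = ord_one" unfolding ord_one_def by auto
  then show ?thesis using wpow_single[OF x wo_one, of 0] Field_one by simp
qed

lemma ord_eq_iff: "Well_order \<alpha> \<Longrightarrow> Well_order \<beta> \<Longrightarrow> ord_eq \<alpha> \<beta> \<longleftrightarrow> \<alpha> =o \<beta>"
  unfolding ord_eq_def word_iso_def ordIso_def iso_iff2 by auto




abbreviation WO :: "'a word \<Rightarrow> bool" where "WO x \<equiv> Well_order (fst x)"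

definition dc :: "nat rel \<Rightarrow> nat set \<Rightarrow> bool" where
  "dc r S \<longleftrightarrow> S \<subseteq> Field r \<and> (\<forall>a\<in>S. \<forall>b. (b, a) \<in> r \<longrightarrow> b \<in> S)"

definition ge :: "nat rel \<Rightarrow> nat \<Rightarrow> nat set" where
  "ge r g = {j \<in> Field r. (g, j) \<in> r}"

lemma uS_F: "underS r p \<subseteq> Field r"
  by (rule Order_Relation.underS_Field)

lemma uS_mem: "a \<in> underS r p \<Longrightarrow> a \<in> Field r"
  using uS_F by fast

lemma ge_Field: "ge r p \<subseteq> Field r"
  unfolding ge_def by auto

lemma dc_underS:
  assumes r: "Well_order r" shows "dc r (underS r p)"
  unfolding dc_def
proof (intro conjI ballI allI impI)
  show "underS r p \<subseteq> Field r" by (rule uS_F)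
  fix a b assume a: "a \<in> underS r p" and ba: "(b, a) \<in> r"
  have ap: "(a, p) \<in> r" "a \<noteq> p" using a unfolding underS_def by auto
  have bp: "(b, p) \<in> r" using wo_trans[OF r ba ap(1)] .
  have "b \<noteq> p"
  proof
    assume "b = p" then have "(p, a) \<in> r" using ba by simp
    then show False using wo_antisym[OF r _ ap(1)] ap(2) by blast
  qed
  then show "b \<in> underS r p" using bp unfolding underS_def by auto
qed

lemma dc_Field: "dc r (Field r)"
  unfolding dc_def by (auto intro: FieldI1)

lemma wo_infl_on:
  assumes wo: "Well_order r" and A: "A \<subseteq> Field r"
    and hF: "\<And>a. a \<in> A \<Longrightarrow> h a \<in> A"
    and hm: "\<And>a b. a \<in> A \<Longrightarrow> b \<in> A \<Longrightarrow> (a, b) \<in> r \<Longrightarrow> a \<noteq> b \<Longrightarrow> (h a, h b) \<in> r \<and> h a \<noteq> h b"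
    and a: "a \<in> A"
  shows "(a, h a) \<in> r"
proof -
  have w: "Well_order (Restr r A)" using wo_Restr[OF wo] .
  have FA: "Field (Restr r A) = A" using Field_Restr_wo[OF wo A] .
  have "(a, h a) \<in> Restr r A"
  proof (rule wo_infl[OF w])
    show "\<And>a. a \<in> Field (Restr r A) \<Longrightarrow> h a \<in> Field (Restr r A)" using FA hF by auto
    show "\<And>a b. a \<in> Field (Restr r A) \<Longrightarrow> b \<in> Field (Restr r A) \<Longrightarrow> (a, b) \<in> Restr r A \<Longrightarrow> a \<noteq> b \<Longrightarrow>
        (h a, h b) \<in> Restr r A \<and> h a \<noteq> h b"
      using FA hF hm by auto
    show "a \<in> Field (Restr r A)" using FA a by simp
  qed
  then show ?thesis by simp
qed

lemma wisof_props:
  assumes "wisof f x y"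
  shows "bij_betw f (F x) (F y)" "\<And>i j. i \<in> F x \<Longrightarrow> j \<in> F x \<Longrightarrow> (i, j) \<in> fst x \<longleftrightarrow> (f i, f j) \<in> fst y"
    "\<And>i. i \<in> F x \<Longrightarrow> snd y (f i) = snd x i" "\<And>i. i \<in> F x \<Longrightarrow> f i \<in> F y"
    "inj_on f (F x)" "f ` F x = F y"
  using assms unfolding wisof_def by (auto simp: bij_betw_def)

lemma iso_sub_dc:
  assumes x: "WO x" and S: "dc (fst x) S" and f: "wisof f x (sub x S)"
  shows "S = F x"
proof
  show "S \<subseteq> F x" using S dc_def by blast
  have SF: "S \<subseteq> F x" using S dc_def by blast
  have FS: "F (sub x S) = S" using Field_sub[OF x SF] .
  have fS: "\<And>a. a \<in> F x \<Longrightarrow> f a \<in> S" using wisof_props(4)[OF f] FS by auto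
  show "F x \<subseteq> S"
  proof
    fix a assume a: "a \<in> F x"
    have "(a, f a) \<in> fst x"
    proof (rule wo_infl_on[OF x subset_refl])
      show "\<And>a. a \<in> F x \<Longrightarrow> f a \<in> F x" using fS SF by auto
      fix a b assume ab: "a \<in> F x" "b \<in> F x" "(a, b) \<in> fst x" "a \<noteq> b"
      have "(f a, f b) \<in> Restr (fst x) S" using wisof_props(2)[OF f] ab by auto
      moreover have "f a \<noteq> f b" using inj_onD[OF wisof_props(5)[OF f]] ab by blast
      ultimately show "(f a, f b) \<in> fst x \<and> f a \<noteq> f b" by auto
    qed (rule a)
    then show "a \<in> S" using S fS[OF a] unfolding dc_def by blast
  qed
qed

lemma iso_sub_dc':
  assumes x: "WO x" and S: "dc (fst x) S" and f: "word_iso x (sub x S)"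
  shows "S = F x"
  using iso_sub_dc[OF x S] f word_iso_wisof by blast

lemma not_iso_underS:
  assumes x: "WO x" and q: "q \<in> F x" shows "\<not> word_iso x (sub x (underS (fst x) q))"
proof
  assume "word_iso x (sub x (underS (fst x) q))"
  then have "underS (fst x) q = F x" using iso_sub_dc'[OF x dc_underS[OF x]] by blast
  then show False using q unfolding underS_def by auto
qed

lemma iso_underS:
  assumes f: "wisof f X Y" and X: "WO X" and p: "p \<in> F X"
  shows "f ` underS (fst X) p = underS (fst Y) (f p)"
proof
  show "f ` underS (fst X) p \<subseteq> underS (fst Y) (f p)"
  proof
    fix b assume "b \<in> f ` underS (fst X) p"
    then obtain a where a: "a \<in> underS (fst X) p" "b = f a" by blast
    have aF: "a \<in> F X" using a(1) by (rule uS_mem)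
    have "(f a, f p) \<in> fst Y" using a(1) wisof_props(2)[OF f aF p] unfolding underS_def by auto
    moreover have "f a \<noteq> f p" using inj_onD[OF wisof_props(5)[OF f] _ aF p] a(1) unfolding underS_def by auto
    ultimately show "b \<in> underS (fst Y) (f p)" using a unfolding underS_def by auto
  qed
  show "underS (fst Y) (f p) \<subseteq> f ` underS (fst X) p"
  proof
    fix b assume b: "b \<in> underS (fst Y) (f p)"
    then have "b \<in> F Y" by (rule uS_mem)
    then obtain a where a: "a \<in> F X" "b = f a" using wisof_props(6)[OF f] by blast
    have "(a, p) \<in> fst X" "a \<noteq> p" using b a wisof_props(2)[OF f a(1) p] unfolding underS_def by auto
    then show "b \<in> f ` underS (fst X) p" using a unfolding underS_def by auto
  qed
qed

lemma iso_ge: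
  assumes f: "wisof f X Y" and X: "WO X" and p: "p \<in> F X"
  shows "f ` ge (fst X) p = ge (fst Y) (f p)"
proof
  show "f ` ge (fst X) p \<subseteq> ge (fst Y) (f p)"
  proof
    fix b assume "b \<in> f ` ge (fst X) p"
    then obtain a where a: "a \<in> ge (fst X) p" "b = f a" by blast
    have aF: "a \<in> F X" using a(1) ge_Field by (auto)
    have "(f p, f a) \<in> fst Y" using a(1) wisof_props(2)[OF f p aF] unfolding ge_def by auto
    then show "b \<in> ge (fst Y) (f p)" using a wisof_props(4)[OF f aF] unfolding ge_def by auto
  qed
  show "ge (fst Y) (f p) \<subseteq> f ` ge (fst X) p"
  proof
    fix b assume b: "b \<in> ge (fst Y) (f p)"
    then have "b \<in> F Y" using ge_Field by auto
    then obtain a where a: "a \<in> F X" "b = f a" using wisof_props(6)[OF f] by blast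
    have "(p, a) \<in> fst X" using b a wisof_props(2)[OF f p a(1)] unfolding ge_def by auto
    then show "b \<in> f ` ge (fst X) p" using a unfolding ge_def by auto
  qed
qed

lemma iso_init:
  assumes f: "wisof f X Y" and X: "WO X" and p: "p \<in> F X"
  shows "word_iso (sub X (underS (fst X) p)) (sub Y (underS (fst Y) (f p)))"
proof -
  have "word_iso (sub X (underS (fst X) p)) (sub Y (f ` underS (fst X) p))"
    using word_iso_sub[OF f X uS_F] .
  then show ?thesis using iso_underS[OF f X p] by simp
qed

lemma iso_final:
  assumes f: "wisof f X Y" and X: "WO X" and p: "p \<in> F X"
  shows "word_iso (sub X (ge (fst X) p)) (sub Y (ge (fst Y) (f p)))"
proof -
  have "word_iso (sub X (ge (fst X) p)) (sub Y (f ` ge (fst X) p))"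
    using word_iso_sub[OF f X ge_Field] .
  then show ?thesis using iso_ge[OF f X p] by simp
qed

lemma underS_sub:
  assumes x: "WO x" and S: "dc (fst x) S" and p: "p \<in> S"
  shows "underS (fst (sub x S)) p = underS (fst x) p"
  using S p unfolding dc_def underS_def by auto

lemma sub_sub_underS:
  assumes x: "WO x" and S: "dc (fst x) S" and p: "p \<in> S"
  shows "sub (sub x S) (underS (fst (sub x S)) p) = sub x (underS (fst x) p)"
proof -
  have "underS (fst x) p \<subseteq> S" using S p unfolding dc_def underS_def by auto
  then show ?thesis using underS_sub[OF x S p] sub_sub by (metis inf.absorb2)
qed

section \<open>Strict lexicographic order and prefixes, position-based\<close>

definition strp :: "'a::linorder word \<Rightarrow> 'a word \<Rightarrow> bool" where
  "strp x y \<longleftrightarrow> (\<exists>p\<in>F x. \<exists>q\<in>F y. word_iso (sub x (underS (fst x) p)) (sub y (underS (fst y) q))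
      \<and> snd x p < snd y q)"

definition pref :: "'a word \<Rightarrow> 'a word \<Rightarrow> bool" where
  "pref x y \<longleftrightarrow> word_iso x y \<or> (\<exists>q\<in>F y. word_iso x (sub y (underS (fst y) q)))"

lemma strpI: "p \<in> F x \<Longrightarrow> q \<in> F y \<Longrightarrow> word_iso (sub x (underS (fst x) p)) (sub y (underS (fst y) q))
   \<Longrightarrow> snd x p < snd y q \<Longrightarrow> strp x y"
  unfolding strp_def by auto

lemma pref_dc: "WO y \<Longrightarrow> pref x y \<longleftrightarrow> (\<exists>S. dc (fst y) S \<and> word_iso x (sub y S))"
proof
  assume y: "WO y" and p: "pref x y"
  show "\<exists>S. dc (fst y) S \<and> word_iso x (sub y S)"
  proof (cases "word_iso x y")
    case True
    then have "word_iso x (sub y (F y))" by simp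
    then show ?thesis using dc_Field by blast
  next
    case False
    then obtain q where "word_iso x (sub y (underS (fst y) q))" using p pref_def by blast
    then show ?thesis using dc_underS[OF y] by blast
  qed
next
  assume y: "WO y" and "\<exists>S. dc (fst y) S \<and> word_iso x (sub y S)"
  then obtain S where S: "dc (fst y) S" "word_iso x (sub y S)" by blast
  show "pref x y"
  proof (cases "S = F y")
    case True
    then have "word_iso x y" using S by simp
    then show ?thesis by (simp add: pref_def)
  next
    case False
    then have "F y - S \<noteq> {}" "F y - S \<subseteq> F y" using S(1) dc_def by auto
    then obtain q where q: "q \<in> F y - S" "\<forall>a\<in>F y - S. (q, a) \<in> fst y" using wo_min[OF y] by blast
    have "S = underS (fst y) q"
    proof
      show "S \<subseteq> underS (fst y) q"
      proof
        fix a assume a: "a \<in> S"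
        have aF: "a \<in> F y" using a S(1) dc_def by blast
        have "(q, a) \<notin> fst y" using a q S(1) unfolding dc_def by blast
        then have "(a, q) \<in> fst y" using wo_total[OF y aF] q by blast
        then show "a \<in> underS (fst y) q" using a q unfolding underS_def by auto
      qed
      show "underS (fst y) q \<subseteq> S"
      proof
        fix a assume a: "a \<in> underS (fst y) q"
        then have aF: "a \<in> F y" by (rule uS_mem)
        show "a \<in> S"
        proof (rule ccontr)
          assume "a \<notin> S"
          then have "(q, a) \<in> fst y" using q aF by blast
          then show False using a wo_antisym[OF y] unfolding underS_def by blast
        qed
      qed
    qed
    then have "word_iso x (sub y (underS (fst y) q))" using S by simp
    then show ?thesis unfolding pref_def using q(1) by auto
  qed
qed

lemma pref_refl: "pref x x" unfolding pref_def by simp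

lemma pref_iso_l:
  assumes i: "word_iso x x'" and p: "pref x y" shows "pref x' y"
proof -
  have i': "word_iso x' x" using word_iso_sym[OF i] .
  show ?thesis using p unfolding pref_def
  proof (elim disjE bexE)
    assume "word_iso x y" then show "word_iso x' y \<or> (\<exists>q\<in>F y. word_iso x' (sub y (underS (fst y) q)))"
      using word_iso_trans[OF i'] by blast
  next
    fix q assume "q \<in> F y" "word_iso x (sub y (underS (fst y) q))"
    then show "word_iso x' y \<or> (\<exists>q\<in>F y. word_iso x' (sub y (underS (fst y) q)))"
      using word_iso_trans[OF i'] by blast
  qed
qed

lemma pref_iso_r:
  assumes y: "WO y" and f: "word_iso y y'" and p: "pref x y" shows "pref x y'"
proof -
  obtain g where g: "wisof g y y'" using f word_iso_wisof by blast
  show ?thesis using p unfolding pref_def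
  proof (elim disjE bexE)
    assume "word_iso x y" then show "word_iso x y' \<or> (\<exists>q\<in>F y'. word_iso x (sub y' (underS (fst y') q)))"
      using f word_iso_trans by blast
  next
    fix q assume q: "q \<in> F y" "word_iso x (sub y (underS (fst y) q))"
    have "word_iso x (sub y' (underS (fst y') (g q)))" using iso_init[OF g y q(1)] q(2) word_iso_trans by blast
    then show "word_iso x y' \<or> (\<exists>q\<in>F y'. word_iso x (sub y' (underS (fst y') q)))"
      using wisof_props(4)[OF g q(1)] by blast
  qed
qed

lemma pref_trans:
  assumes y: "WO y" and z: "WO z" and xy: "pref x y" and yz: "pref y z" shows "pref x z"
proof -
  obtain S where S: "dc (fst y) S" "word_iso x (sub y S)" using xy pref_dc[OF y] by blast
  obtain T where T: "dc (fst z) T" "word_iso y (sub z T)" using yz pref_dc[OF z] by blast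
  obtain g where g: "wisof g y (sub z T)" using T(2) word_iso_wisof by blast
  have TF: "T \<subseteq> F z" using T(1) dc_def by blast
  have SF: "S \<subseteq> F y" using S(1) dc_def by blast
  have FT: "F (sub z T) = T" using Field_sub[OF z TF] .
  have 1: "word_iso (sub y S) (sub (sub z T) (g ` S))" using word_iso_sub[OF g y SF] .
  have 2: "sub (sub z T) (g ` S) = sub z (g ` S)"
  proof -
    have "g ` S \<subseteq> T" using wisof_props(4)[OF g] SF FT by auto
    then show ?thesis using sub_sub by (metis inf.absorb2)
  qed
  have "dc (fst z) (g ` S)" unfolding dc_def
  proof (intro conjI ballI allI impI)
    show "g ` S \<subseteq> F z" using wisof_props(4)[OF g] SF FT TF by auto
    fix a b assume a: "a \<in> g ` S" and ba: "(b, a) \<in> fst z"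
    then obtain a0 where a0: "a0 \<in> S" "a = g a0" by blast
    have aT: "a \<in> T" using a0 wisof_props(4)[OF g] SF FT by auto
    then have bT: "b \<in> T" using T(1) ba unfolding dc_def by blast
    then have "b \<in> F (sub z T)" using FT by simp
    then obtain b0 where b0: "b0 \<in> F y" "b = g b0" using wisof_props(6)[OF g] by auto
    have "(b, a) \<in> fst (sub z T)" using ba aT bT by simp
    then have "(b0, a0) \<in> fst y" using wisof_props(2)[OF g b0(1)] a0 SF b0 by auto
    then have "b0 \<in> S" using S(1) a0 unfolding dc_def by blast
    then show "b \<in> g ` S" using b0 by blast
  qed
  moreover have "word_iso x (sub z (g ` S))" using S(2) 1 2 word_iso_trans by metis
  ultimately show ?thesis using pref_dc[OF z] by blast
qed

lemma pref_antisym: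
  assumes x: "WO x" and y: "WO y" and xy: "pref x y" and yx: "pref y x" shows "word_iso x y"
proof -
  obtain S where S: "dc (fst y) S" "word_iso x (sub y S)" using xy pref_dc[OF y] by blast
  obtain T where T: "dc (fst x) T" "word_iso y (sub x T)" using yx pref_dc[OF x] by blast
  obtain g where g: "wisof g y (sub x T)" using T(2) word_iso_wisof by blast
  have TF: "T \<subseteq> F x" using T(1) dc_def by blast
  have SF: "S \<subseteq> F y" using S(1) dc_def by blast
  have FT: "F (sub x T) = T" using Field_sub[OF x TF] .
  have gS: "g ` S \<subseteq> T" using wisof_props(4)[OF g] SF FT by auto
  have 1: "word_iso (sub y S) (sub x (g ` S))"
    using word_iso_sub[OF g y SF] sub_sub gS by (metis inf.absorb2)
  have dcg: "dc (fst x) (g ` S)" unfolding dc_def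
  proof (intro conjI ballI allI impI)
    show "g ` S \<subseteq> F x" using gS TF by auto
    fix a b assume a: "a \<in> g ` S" and ba: "(b, a) \<in> fst x"
    then obtain a0 where a0: "a0 \<in> S" "a = g a0" by blast
    have aT: "a \<in> T" using a0 gS by auto
    then have bT: "b \<in> T" using T(1) ba unfolding dc_def by blast
    then have "b \<in> F (sub x T)" using FT by simp
    then obtain b0 where b0: "b0 \<in> F y" "b = g b0" using wisof_props(6)[OF g] by auto
    have "(b, a) \<in> fst (sub x T)" using ba aT bT by simp
    then have "(b0, a0) \<in> fst y" using wisof_props(2)[OF g b0(1)] a0 SF b0 by auto
    then have "b0 \<in> S" using S(1) a0 unfolding dc_def by blast
    then show "b \<in> g ` S" using b0 by blast
  qed
  have "word_iso x (sub x (g ` S))" using S(2) 1 word_iso_trans by blast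
  then have "g ` S = F x" using iso_sub_dc'[OF x dcg] by blast
  then have "T = F x" using gS TF by auto
  then show ?thesis using T(2) word_iso_sym by simp
qed

lemma strp_iso:
  assumes x: "WO x" and y: "WO y" and s: "strp x y" and fx: "word_iso x x'" and fy: "word_iso y y'"
  shows "strp x' y'"
proof -
  obtain f where f: "wisof f x x'" using fx word_iso_wisof by blast
  obtain g where g: "wisof g y y'" using fy word_iso_wisof by blast
  obtain p q where pq: "p \<in> F x" "q \<in> F y" "word_iso (sub x (underS (fst x) p)) (sub y (underS (fst y) q))"
    "snd x p < snd y q" using s strp_def by blast
  have "word_iso (sub x' (underS (fst x') (f p))) (sub y' (underS (fst y') (g q)))"
    using iso_init[OF f x pq(1)] iso_init[OF g y pq(2)] pq(3) word_iso_sym word_iso_trans by metis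
  moreover have "snd x' (f p) < snd y' (g q)" using pq wisof_props(3)[OF f] wisof_props(3)[OF g] by simp
  ultimately show ?thesis unfolding strp_def using wisof_props(4)[OF f pq(1)] wisof_props(4)[OF g pq(2)] by blast
qed

lemma strp_sub_r:
  assumes y: "WO y" and S: "dc (fst y) S" and s: "strp x (sub y S)" shows "strp x y"
proof -
  have SF: "S \<subseteq> F y" using S dc_def by blast
  obtain p q where pq: "p \<in> F x" "q \<in> F (sub y S)" "word_iso (sub x (underS (fst x) p)) (sub (sub y S) (underS (fst (sub y S)) q))"
    "snd x p < snd (sub y S) q" using s strp_def by blast
  have qS: "q \<in> S" using pq(2) Field_sub[OF y SF] by simp
  then show ?thesis unfolding strp_def using pq sub_sub_underS[OF y S qS] SF by auto
qed

lemma strp_sub_l: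
  assumes x: "WO x" and S: "dc (fst x) S" and s: "strp (sub x S) y" shows "strp x y"
proof -
  have SF: "S \<subseteq> F x" using S dc_def by blast
  obtain p q where pq: "p \<in> F (sub x S)" "q \<in> F y" "word_iso (sub (sub x S) (underS (fst (sub x S)) p)) (sub y (underS (fst y) q))"
    "snd (sub x S) p < snd y q" using s strp_def by blast
  have pS: "p \<in> S" using pq(1) Field_sub[OF x SF] by simp
  then show ?thesis unfolding strp_def using pq sub_sub_underS[OF x S pS] SF by auto
qed

lemma strp_pref_r:
  assumes x: "WO x" and y: "WO y" and y': "WO y'" and s: "strp x y" and p: "pref y y'" shows "strp x y'"
proof -
  obtain S where S: "dc (fst y') S" "word_iso y (sub y' S)" using p pref_dc[OF y'] by blast
  have "strp x (sub y' S)" using strp_iso[OF x y s word_iso_refl S(2)] .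
  then show ?thesis using strp_sub_r[OF y' S(1)] by blast
qed

lemma strp_pref_l:
  assumes x: "WO x" and y: "WO y" and x': "WO x'" and s: "strp x y" and p: "pref x x'" shows "strp x' y"
proof -
  obtain S where S: "dc (fst x') S" "word_iso x (sub x' S)" using p pref_dc[OF x'] by blast
  have "strp (sub x' S) y" using strp_iso[OF x y s S(2) word_iso_refl] .
  then show ?thesis using strp_sub_l[OF x' S(1)] by blast
qed

lemma underS_eq:
  assumes x: "WO x" and p: "p \<in> F x" and q: "q \<in> F x"
    and i: "word_iso (sub x (underS (fst x) p)) (sub x (underS (fst x) q))"
  shows "p = q"
proof (rule ccontr)
  assume ne: "p \<noteq> q"
  have gen: "False" if pq: "(p, q) \<in> fst x" "p \<noteq> q" "p \<in> F x" "q \<in> F x"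
    and i: "word_iso (sub x (underS (fst x) q)) (sub x (underS (fst x) p))" for p q
  proof -
    obtain h where h: "wisof h (sub x (underS (fst x) q)) (sub x (underS (fst x) p))"
      using i word_iso_wisof by blast
    let ?A = "underS (fst x) q"
    have AF: "?A \<subseteq> F x" by (rule uS_F)
    have F1: "F (sub x ?A) = ?A" using Field_sub[OF x AF] .
    have F2: "F (sub x (underS (fst x) p)) = underS (fst x) p" using Field_sub[OF x uS_F] .
    have sub: "underS (fst x) p \<subseteq> ?A" using dc_underS[OF x] pq unfolding dc_def underS_def by blast
    have hA: "\<And>a. a \<in> ?A \<Longrightarrow> h a \<in> underS (fst x) p" using wisof_props(4)[OF h] F1 F2 by auto
    have pA: "p \<in> ?A" using pq unfolding underS_def by auto
    have "(p, h p) \<in> fst x"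
    proof (rule wo_infl_on[OF x AF])
      show "\<And>a. a \<in> ?A \<Longrightarrow> h a \<in> ?A" using hA sub by blast
      fix a b assume ab: "a \<in> ?A" "b \<in> ?A" "(a, b) \<in> fst x" "a \<noteq> b"
      have "(h a, h b) \<in> fst (sub x (underS (fst x) p))" using wisof_props(2)[OF h] ab F1 by auto
      moreover have "h a \<noteq> h b" using inj_onD[OF wisof_props(5)[OF h]] ab F1 by auto
      ultimately show "(h a, h b) \<in> fst x \<and> h a \<noteq> h b" by auto
    qed (rule pA)
    moreover have "(h p, p) \<in> fst x" "h p \<noteq> p" using hA[OF pA] unfolding underS_def by auto
    ultimately show False using wo_antisym[OF x] by blast
  qed
  show False
  proof (cases "(p, q) \<in> fst x")
    case True then show False using gen[of p q] ne p q i word_iso_sym by blast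
  next
    case False
    then have "(q, p) \<in> fst x" using wo_total[OF x p q] by blast
    then show False using gen[of q p] ne p q i by blast
  qed
qed

lemma strp_irrefl:
  assumes x: "WO x" shows "\<not> strp x x"
proof
  assume "strp x x"
  then obtain p q where pq: "p \<in> F x" "q \<in> F x" "word_iso (sub x (underS (fst x) p)) (sub x (underS (fst x) q))"
    "snd x p < snd x q" using strp_def by blast
  have "p = q" using underS_eq[OF x pq(1,2,3)] .
  then show False using pq(4) by simp
qed

lemma strp_trans:
  assumes x: "WO x" and y: "WO y" and z: "WO z" and xy: "strp x y" and yz: "strp y z"
  shows "strp x z"
proof -
  obtain p q where pq: "p \<in> F x" "q \<in> F y" "word_iso (sub x (underS (fst x) p)) (sub y (underS (fst y) q))"
    "snd x p < snd y q" using xy strp_def by blast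
  obtain q' s where qs: "q' \<in> F y" "s \<in> F z" "word_iso (sub y (underS (fst y) q')) (sub z (underS (fst z) s))"
    "snd y q' < snd z s" using yz strp_def by blast
  consider "q = q'" | "(q, q') \<in> fst y" "q \<noteq> q'" | "(q', q) \<in> fst y" "q' \<noteq> q"
    using wo_total[OF y pq(2) qs(1)] by blast
  then show ?thesis
  proof cases
    case 1
    have "word_iso (sub x (underS (fst x) p)) (sub z (underS (fst z) s))"
      using word_iso_trans[OF pq(3)] qs(3) 1 by simp
    moreover have "snd x p < snd z s" using pq(4) qs(4) 1 by simp
    ultimately show ?thesis unfolding strp_def using pq(1) qs(2) by blast
  next
    case 2
    let ?Y = "sub y (underS (fst y) q')"
    obtain g where g: "wisof g ?Y (sub z (underS (fst z) s))" using qs(3) word_iso_wisof by blast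
    have Yw: "WO ?Y" using wo_sub[OF y] .
    have qU: "q \<in> underS (fst y) q'" using 2 unfolding underS_def by auto
    have qF: "q \<in> F ?Y" using Field_sub[OF y uS_F] qU by simp
    have zs: "WO (sub z (underS (fst z) s))" using wo_sub[OF z] .
    have 3: "word_iso (sub ?Y (underS (fst ?Y) q)) (sub (sub z (underS (fst z) s)) (underS (fst (sub z (underS (fst z) s))) (g q)))"
      using iso_init[OF g Yw qF] .
    have gq: "g q \<in> underS (fst z) s" using wisof_props(4)[OF g qF] Field_sub[OF z uS_F] by simp
    have e1: "sub ?Y (underS (fst ?Y) q) = sub y (underS (fst y) q)" using sub_sub_underS[OF y dc_underS[OF y] qU] .
    have e2: "sub (sub z (underS (fst z) s)) (underS (fst (sub z (underS (fst z) s))) (g q)) = sub z (underS (fst z) (g q))"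
      using sub_sub_underS[OF z dc_underS[OF z] gq] .
    have "word_iso (sub x (underS (fst x) p)) (sub z (underS (fst z) (g q)))"
      using pq(3) 3 e1 e2 word_iso_trans by metis
    moreover have "snd z (g q) = snd y q" using wisof_props(3)[OF g qF] by simp
    moreover have "g q \<in> F z" using gq by (rule uS_mem)
    ultimately show ?thesis using pq(1,4) strpI by metis
  next
    case 3
    let ?Y = "sub y (underS (fst y) q)"
    obtain g where g: "wisof g ?Y (sub x (underS (fst x) p))" using pq(3) word_iso_sym word_iso_wisof by blast
    have Yw: "WO ?Y" using wo_sub[OF y] .
    have qU: "q' \<in> underS (fst y) q" using 3 unfolding underS_def by auto
    have qF: "q' \<in> F ?Y" using Field_sub[OF y uS_F] qU by simp
    have 4: "word_iso (sub ?Y (underS (fst ?Y) q')) (sub (sub x (underS (fst x) p)) (underS (fst (sub x (underS (fst x) p))) (g q')))"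
      using iso_init[OF g Yw qF] .
    have gq: "g q' \<in> underS (fst x) p" using wisof_props(4)[OF g qF] Field_sub[OF x uS_F] by simp
    have e1: "sub ?Y (underS (fst ?Y) q') = sub y (underS (fst y) q')" using sub_sub_underS[OF y dc_underS[OF y] qU] .
    have e2: "sub (sub x (underS (fst x) p)) (underS (fst (sub x (underS (fst x) p))) (g q')) = sub x (underS (fst x) (g q'))"
      using sub_sub_underS[OF x dc_underS[OF x] gq] .
    have "word_iso (sub x (underS (fst x) (g q'))) (sub z (underS (fst z) s))"
      using qs(3) 4 e1 e2 word_iso_trans word_iso_sym by metis
    moreover have "snd x (g q') = snd y q'" using wisof_props(3)[OF g qF] by simp
    moreover have "g q' \<in> F x" using gq by (rule uS_mem)
    ultimately show ?thesis using qs(2,4) strpI by metis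
  qed
qed

lemma strp_antisym: "WO x \<Longrightarrow> WO y \<Longrightarrow> strp x y \<Longrightarrow> strp y x \<Longrightarrow> False"
  using strp_trans strp_irrefl by blast

lemma strp_pref_contra1: "WO x \<Longrightarrow> WO y \<Longrightarrow> strp x y \<Longrightarrow> pref y x \<Longrightarrow> False"
  using strp_pref_r strp_irrefl by blast

lemma strp_pref_contra2: "WO x \<Longrightarrow> WO y \<Longrightarrow> strp x y \<Longrightarrow> pref x y \<Longrightarrow> False"
  using strp_pref_l strp_irrefl by blast




lemma letter_fst[simp]: "fst (letter a) = {(0, 0)}" by (simp add: letter_def)
lemma letter_snd[simp]: "snd (letter a) n = a" by (simp add: letter_def)
lemma wo_letter: "WO (letter a)" using wo_one by (simp add: ord_one_def)
lemma F_letter[simp]: "F (letter a) = {0}" by (simp add: Field_def)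

lemma wo_conc: "WO x \<Longrightarrow> WO y \<Longrightarrow> WO (conc x y)"
  by (simp add: wo_rsum)

lemma F_conc: "F (conc x y) = sl ` F x \<union> sr ` F y" by (simp add: Field_rsum)

lemma dc_sl: "dc (fst (conc x y)) (sl ` F x)"
  unfolding dc_def
proof (intro conjI ballI allI impI)
  show "sl ` F x \<subseteq> F (conc x y)" using F_conc by auto
  fix a b assume a: "a \<in> sl ` F x" and ba: "(b, a) \<in> fst (conc x y)"
  then obtain i where i: "a = sl i" "i \<in> F x" by blast
  show "b \<in> sl ` F x"
  proof (cases b rule: nat_cases_sum)
    case (1 k) then show ?thesis using ba i by (auto intro: FieldI1)
  next
    case (2 k) then show ?thesis using ba i by auto
  qed
qed

lemma sub_conc_l:
  assumes x: "WO x" and y: "WO y"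
  shows "word_iso (sub (conc x y) (sl ` F x)) x"
proof -
  have "sub (conc x y) (sl ` F x \<union> sr ` {}) = conc (sub x (F x)) (sub y {})"
    using sub_conc[OF x y] by blast
  then have "sub (conc x y) (sl ` F x) = conc x (sub y {})" by simp
  moreover have "F (sub y {}) = {}" by (simp add: Field_def)
  ultimately show ?thesis using conc_empty_r by metis
qed

lemma pref_conc:
  assumes x: "WO x" and y: "WO y" shows "pref x (conc x y)"
  using pref_dc[OF wo_conc[OF x y]] dc_sl sub_conc_l[OF x y] word_iso_sym by blast

lemma dc_split:
  assumes y: "WO y" and S: "dc (fst y) S"
  shows "word_iso y (conc (sub y S) (sub y (F y - S)))"
proof -
  have SF: "S \<subseteq> F y" using S dc_def by blast
  have "word_iso (conc (sub y S) (sub y (F y - S))) (sub y (S \<union> (F y - S)))"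
  proof (rule split_iso[OF y SF])
    show "F y - S \<subseteq> F y" by blast
    fix a b assume a: "a \<in> S" and b: "b \<in> F y - S"
    have "(b, a) \<notin> fst y" using S a b unfolding dc_def by blast
    then show "(a, b) \<in> fst y \<and> a \<noteq> b" using wo_total[OF y] a b SF by blast
  qed
  moreover have "S \<union> (F y - S) = F y" using SF by blast
  ultimately show ?thesis using word_iso_sym by simp
qed

lemma letter_iso:
  assumes x: "WO x" and p: "p \<in> F x" shows "word_iso (sub x {p}) (letter (snd x p))"
  unfolding word_iso_wisof
proof (intro exI)
  have pF: "{p} \<subseteq> F x" using p by simp
  have Fp: "F (sub x {p}) = {p}" using Field_sub[OF x pF] .
  show "wisof (\<lambda>_. 0) (sub x {p}) (letter (snd x p))"
    unfolding wisof_def Fp using wo_refl[OF x p] by (auto simp: bij_betw_def)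
qed

lemma split3:
  assumes x: "WO x" and p: "p \<in> F x"
  shows "word_iso x (conc (sub x (underS (fst x) p)) (conc (letter (snd x p)) (sub x (aboveS (fst x) p))))"
proof -
  let ?U = "underS (fst x) p" and ?A = "aboveS (fst x) p"
  have AF: "?A \<subseteq> F x" unfolding aboveS_def by (auto intro: FieldI2)
  have UF: "?U \<subseteq> F x" by (rule uS_F)
  have 1: "word_iso (conc (sub x {p}) (sub x ?A)) (sub x ({p} \<union> ?A))"
  proof (rule split_iso[OF x _ AF])
    show "{p} \<subseteq> F x" using p by simp
    fix a b assume "a \<in> {p}" "b \<in> ?A" then show "(a, b) \<in> fst x \<and> a \<noteq> b" unfolding aboveS_def by auto
  qed
  have 2: "word_iso (conc (sub x ?U) (sub x ({p} \<union> ?A))) (sub x (?U \<union> ({p} \<union> ?A)))"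
  proof (rule split_iso[OF x UF])
    show "{p} \<union> ?A \<subseteq> F x" using p AF by simp
    fix a b assume a: "a \<in> ?U" and b: "b \<in> {p} \<union> ?A"
    have ap: "(a, p) \<in> fst x" "a \<noteq> p" using a unfolding underS_def by auto
    show "(a, b) \<in> fst x \<and> a \<noteq> b"
    proof (cases "b = p")
      case True then show ?thesis using ap by simp
    next
      case False
      then have pb: "(p, b) \<in> fst x" using b unfolding aboveS_def by auto
      have "(a, b) \<in> fst x" using wo_trans[OF x ap(1) pb] .
      moreover have "a \<noteq> b"
      proof
        assume "a = b" then show False using wo_antisym[OF x ap(1)] pb ap(2) by simp
      qed
      ultimately show ?thesis by simp
    qed
  qed
  have 3: "?U \<union> ({p} \<union> ?A) = F x"
  proof
    show "?U \<union> ({p} \<union> ?A) \<subseteq> F x" using UF AF p by blast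
    show "F x \<subseteq> ?U \<union> ({p} \<union> ?A)"
    proof
      fix b assume b: "b \<in> F x"
      then show "b \<in> ?U \<union> ({p} \<union> ?A)" using wo_total[OF x b p] unfolding underS_def aboveS_def by auto
    qed
  qed
  have 4: "word_iso x (conc (sub x ?U) (sub x ({p} \<union> ?A)))" using 2 3 word_iso_sym by simp
  have 5: "word_iso (sub x ({p} \<union> ?A)) (conc (letter (snd x p)) (sub x ?A))"
    using word_iso_sym[OF 1] word_iso_conc_l[OF letter_iso[OF x p]] word_iso_trans by blast
  show ?thesis using 4 word_iso_conc_r[OF 5] word_iso_trans by blast
qed

lemma is_word_sub: "WO x \<Longrightarrow> is_word (sub x S)"
  unfolding is_word_def by (rule wo_sub)

lemma strp_str_less:
  assumes x: "WO x" and y: "WO y" and s: "strp x y" shows "str_less x y"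
proof -
  obtain p q where pq: "p \<in> F x" "q \<in> F y" "word_iso (sub x (underS (fst x) p)) (sub y (underS (fst y) q))"
    "snd x p < snd y q" using s strp_def by blast
  let ?y0 = "sub x (underS (fst x) p)"
  have 1: "word_iso x (conc ?y0 (conc (letter (snd x p)) (sub x (aboveS (fst x) p))))" using split3[OF x pq(1)] .
  have 2: "word_iso y (conc (sub y (underS (fst y) q)) (conc (letter (snd y q)) (sub y (aboveS (fst y) q))))"
    using split3[OF y pq(2)] .
  have 3: "word_iso y (conc ?y0 (conc (letter (snd y q)) (sub y (aboveS (fst y) q))))"
    using 2 word_iso_conc_l[OF word_iso_sym[OF pq(3)]] word_iso_trans by blast
  show ?thesis unfolding str_less_def
    apply (rule exI[of _ "snd x p"], rule exI[of _ "snd y q"], rule exI[of _ ?y0],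
        rule exI[of _ "sub x (aboveS (fst x) p)"], rule exI[of _ "sub y (aboveS (fst y) q)"])
    using pq(4) 1 3 is_word_sub[OF x] is_word_sub[OF y] by simp
qed

lemma init_letter:
  fixes a :: "'a"
  assumes y0: "WO y0" and z: "WO z"
  defines "X \<equiv> conc y0 (conc (letter a) z)"
  shows "sr (sl 0) \<in> F X" "snd X (sr (sl 0)) = a" "word_iso (sub X (underS (fst X) (sr (sl 0)))) y0"
proof -
  show "sr (sl 0) \<in> F X" unfolding X_def F_conc by simp
  show "snd X (sr (sl 0)) = a" unfolding X_def by simp
  have lz: "WO (conc (letter a) z)" using wo_conc[OF wo_letter z] .
  have U: "underS (fst X) (sr (sl 0)) = sl ` F y0"
  proof (rule set_eqI)
    fix n show "n \<in> underS (fst X) (sr (sl 0)) \<longleftrightarrow> n \<in> sl ` F y0"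
    proof (cases n rule: nat_cases_sum)
      case (1 i)
      have "(sl 0, sl 0) \<in> rsum {(0, 0)} (fst z)" by simp
      then have "sl 0 \<in> Field (rsum {(0, 0)} (fst z))" by (rule FieldI1)
      then show ?thesis using 1 unfolding X_def underS_def by auto
    next
      case (2 m)
      have "sr m \<notin> underS (fst X) (sr (sl 0))"
      proof (cases m rule: nat_cases_sum)
        case (1 k) then show ?thesis unfolding X_def underS_def by auto
      next
        case (2 k) then show ?thesis unfolding X_def underS_def by auto
      qed
      then show ?thesis using 2 by auto
    qed
  qed
  show "word_iso (sub X (underS (fst X) (sr (sl 0)))) y0"
    unfolding U unfolding X_def using sub_conc_l[OF y0 lz] .
qed

lemma str_less_strp:
  assumes x: "WO x" and y: "WO y" and s: "str_less x y" shows "strp x y"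
proof -
  obtain a b y0 z z' where o: "a < b" "is_word y0" "is_word z" "is_word z'"
    "word_iso x (conc y0 (conc (letter a) z))" "word_iso y (conc y0 (conc (letter b) z'))"
    using s str_less_def by blast
  have w: "WO y0" "WO z" "WO z'" using o unfolding is_word_def by auto
  let ?X = "conc y0 (conc (letter a) z)" and ?Y = "conc y0 (conc (letter b) z')"
  have X: "WO ?X" using wo_conc[OF w(1) wo_conc[OF wo_letter w(2)]] .
  have Y: "WO ?Y" using wo_conc[OF w(1) wo_conc[OF wo_letter w(3)]] .
  note iX = init_letter[OF w(1) w(2), of a] and iY = init_letter[OF w(1) w(3), of b]
  have "strp ?X ?Y"
  proof (rule strpI[OF iX(1) iY(1)])
    show "word_iso (sub ?X (underS (fst ?X) (sr (sl 0)))) (sub ?Y (underS (fst ?Y) (sr (sl 0))))"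
      using word_iso_trans[OF iX(3) word_iso_sym[OF iY(3)]] .
    show "snd ?X (sr (sl 0)) < snd ?Y (sr (sl 0))" using iX(2) iY(2) o(1) by simp
  qed
  then show ?thesis using strp_iso[OF X Y] o(5,6) word_iso_sym by blast
qed

lemma is_prefix_pref:
  assumes x: "WO x" and y: "WO y" and p: "is_prefix x y" shows "pref x y"
proof -
  obtain z where z: "is_word z" "word_iso y (conc x z)" using p is_prefix_def by blast
  have zw: "WO z" using z is_word_def by blast
  show ?thesis using pref_iso_r[OF wo_conc[OF x zw] word_iso_sym[OF z(2)] pref_conc[OF x zw]] .
qed

lemma pref_is_prefix:
  assumes y: "WO y" and p: "pref x y" shows "is_prefix x y"
proof -
  obtain S where S: "dc (fst y) S" "word_iso x (sub y S)" using p pref_dc[OF y] by blast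
  have "word_iso y (conc x (sub y (F y - S)))"
    using dc_split[OF y S(1)] word_iso_conc_l[OF word_iso_sym[OF S(2)]] word_iso_trans by blast
  then show ?thesis unfolding is_prefix_def using is_word_sub[OF y] by blast
qed

lemma lex_le_iff:
  assumes x: "WO x" and y: "WO y" shows "lex_le x y \<longleftrightarrow> pref x y \<or> strp x y"
proof
  assume "lex_le x y"
  then show "pref x y \<or> strp x y" unfolding lex_le_def
  proof
    assume "is_prefix x y" then show ?thesis using is_prefix_pref[OF x y] by simp
  next
    assume "str_less x y" then show ?thesis using str_less_strp[OF x y] by simp
  qed
next
  assume "pref x y \<or> strp x y"
  then show "lex_le x y" unfolding lex_le_def
  proof
    assume "pref x y" then show "is_prefix x y \<or> str_less x y" using pref_is_prefix[OF y] by simp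
  next
    assume "strp x y" then show "is_prefix x y \<or> str_less x y" using strp_str_less[OF x y] by simp
  qed
qed

lemma lex_le_iso_r:
  assumes l: "lex_le x y" and i: "word_iso y y'" shows "lex_le x y'"
  using l unfolding lex_le_def
proof
  assume "is_prefix x y"
  then obtain z where z: "is_word z" "word_iso y (conc x z)" unfolding is_prefix_def by blast
  have "word_iso y' (conc x z)" using word_iso_trans[OF word_iso_sym[OF i] z(2)] .
  then show "is_prefix x y' \<or> str_less x y'" unfolding is_prefix_def using z(1) by blast
next
  assume "str_less x y"
  then obtain a b y0 z z' where o: "a < b" "is_word y0" "is_word z" "is_word z'"
    "word_iso x (conc y0 (conc (letter a) z))" "word_iso y (conc y0 (conc (letter b) z'))"
    unfolding str_less_def by blast
  have "word_iso y' (conc y0 (conc (letter b) z'))" using word_iso_trans[OF word_iso_sym[OF i] o(6)] .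
  then have "str_less x y'" unfolding str_less_def using o(1-5) by blast
  then show "is_prefix x y' \<or> str_less x y'" by simp
qed

lemma prime_suffix:
  assumes pw: "prime_word w" and w: "WO w" and g: "g \<in> F w" and ng: "i \<in> F w" "(i, g) \<in> fst w" "i \<noteq> g"
  shows "pref w (sub w (ge (fst w) g)) \<or> strp w (sub w (ge (fst w) g))"
proof -
  have "proper_suffix (sub w (ge (fst w) g)) w"
    unfolding proper_suffix_def using g ng by (auto simp: sub_def ge_def)
  then have "lex_le w (sub w (ge (fst w) g))" using pw prime_word_def by blast
  then show ?thesis using lex_le_iff[OF w wo_sub[OF w]] by blast
qed

lemma proper_suffixE:
  assumes "proper_suffix z w"
  obtains g i where "g \<in> F w" "i \<in> F w" "(i, g) \<in> fst w" "i \<noteq> g" "word_iso z (sub w (ge (fst w) g))"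
  using assms unfolding proper_suffix_def by (auto simp: sub_def ge_def)




lemma dc_sub: "dc r S \<Longrightarrow> S \<subseteq> Field r" unfolding dc_def by blast
lemma dc_down: "dc r S \<Longrightarrow> a \<in> S \<Longrightarrow> (b, a) \<in> r \<Longrightarrow> b \<in> S" unfolding dc_def by blast

lemma underS_sl: "underS (rsum r s) (sl i) = sl ` underS r i"
proof (rule set_eqI)
  fix n show "n \<in> underS (rsum r s) (sl i) \<longleftrightarrow> n \<in> sl ` underS r i"
    by (cases n rule: nat_cases_sum) (auto simp: underS_def)
qed

lemma underS_sr: "j \<in> Field s \<Longrightarrow> underS (rsum r s) (sr j) = sl ` Field r \<union> sr ` underS s j"
proof (rule set_eqI)
  fix n assume j: "j \<in> Field s"
  show "n \<in> underS (rsum r s) (sr j) \<longleftrightarrow> n \<in> sl ` Field r \<union> sr ` underS s j"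
    by (cases n rule: nat_cases_sum) (auto simp: underS_def j)
qed

lemma ge_sl: "i \<in> Field r \<Longrightarrow> ge (rsum r s) (sl i) = sl ` ge r i \<union> sr ` Field s"
proof (rule set_eqI)
  fix n assume i: "i \<in> Field r"
  show "n \<in> ge (rsum r s) (sl i) \<longleftrightarrow> n \<in> sl ` ge r i \<union> sr ` Field s"
    by (cases n rule: nat_cases_sum) (auto simp: ge_def i Field_rsum)
qed

lemma ge_sr: "ge (rsum r s) (sr j) = sr ` ge s j"
proof (rule set_eqI)
  fix n
  show "n \<in> ge (rsum r s) (sr j) \<longleftrightarrow> n \<in> sr ` ge s j"
    by (cases n rule: nat_cases_sum) (auto simp: ge_def Field_rsum)
qed

lemma underS_pe:
  assumes u: "WO u" and a: "Well_order \<alpha>" and i: "i \<in> F u" and b: "b \<in> Field \<alpha>"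
  shows "underS (fst (wpow u \<alpha>)) (pe i b) =
    {pe i' b' | i' b'. i' \<in> F u \<and> b' \<in> underS \<alpha> b} \<union> (\<lambda>i'. pe i' b) ` underS (fst u) i"
proof (rule set_eqI)
  fix n
  obtain j c where n: "n = pe j c" by (rule nat_cases_prod)
  show "n \<in> underS (fst (wpow u \<alpha>)) (pe i b) \<longleftrightarrow>
    n \<in> {pe i' b' | i' b'. i' \<in> F u \<and> b' \<in> underS \<alpha> b} \<union> (\<lambda>i'. pe i' b) ` underS (fst u) i"
    unfolding n using i b by (auto simp: underS_def intro: FieldI1)
qed

lemma ge_pe:
  assumes u: "WO u" and a: "Well_order \<alpha>" and i: "i \<in> F u" and b: "b \<in> Field \<alpha>"
  shows "ge (fst (wpow u \<alpha>)) (pe i b) =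
    (\<lambda>i'. pe i' b) ` ge (fst u) i \<union> {pe i' b' | i' b'. i' \<in> F u \<and> b' \<in> aboveS \<alpha> b}"
proof (rule set_eqI)
  fix n
  obtain j c where n: "n = pe j c" by (rule nat_cases_prod)
  show "n \<in> ge (fst (wpow u \<alpha>)) (pe i b) \<longleftrightarrow>
    n \<in> (\<lambda>i'. pe i' b) ` ge (fst u) i \<union> {pe i' b' | i' b'. i' \<in> F u \<and> b' \<in> aboveS \<alpha> b}"
    unfolding n using i b u a by (auto simp: ge_def aboveS_def intro: FieldI2)
qed

lemma init_wpow:
  assumes u: "WO u" and a: "Well_order \<alpha>" and i: "i \<in> F u" and b: "b \<in> Field \<alpha>"
  shows "word_iso (sub (wpow u \<alpha>) (underS (fst (wpow u \<alpha>)) (pe i b)))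
     (conc (wpow u (Restr \<alpha> (underS \<alpha> b))) (sub u (underS (fst u) i)))"
proof -
  let ?S1 = "{pe i' b' | i' b'. i' \<in> F u \<and> b' \<in> underS \<alpha> b}" and ?S2 = "(\<lambda>i'. pe i' b) ` underS (fst u) i"
  have W: "WO (wpow u \<alpha>)" using wo_wpow[OF u a] .
  have S1: "?S1 \<subseteq> F (wpow u \<alpha>)" using u a uS_F by (auto dest: uS_mem)
  have S2: "?S2 \<subseteq> F (wpow u \<alpha>)" using u a b by (auto dest: uS_mem)
  have 1: "word_iso (conc (sub (wpow u \<alpha>) ?S1) (sub (wpow u \<alpha>) ?S2)) (sub (wpow u \<alpha>) (?S1 \<union> ?S2))"
  proof (rule split_iso[OF W S1 S2])
    fix p q assume "p \<in> ?S1" "q \<in> ?S2"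
    then show "(p, q) \<in> fst (wpow u \<alpha>) \<and> p \<noteq> q" using b by (auto simp: underS_def intro: FieldI1)
  qed
  have 2: "sub (wpow u \<alpha>) ?S1 = wpow u (Restr \<alpha> (underS \<alpha> b))" using sub_wpow[OF u a uS_F] .
  have 3: "word_iso (sub (wpow u \<alpha>) ?S2) (sub u (underS (fst u) i))" using copy_iso[OF u a uS_F b] .
  have 5: "word_iso (conc (sub (wpow u \<alpha>) ?S1) (sub (wpow u \<alpha>) ?S2))
     (conc (wpow u (Restr \<alpha> (underS \<alpha> b))) (sub u (underS (fst u) i)))"
    using word_iso_conc_r[OF 3] 2 by simp
  show ?thesis unfolding underS_pe[OF u a i b]
    using word_iso_trans[OF word_iso_sym[OF 1] 5] .
qed

lemma fin_wpow:
  assumes u: "WO u" and a: "Well_order \<alpha>" and i: "i \<in> F u" and b: "b \<in> Field \<alpha>"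
  shows "word_iso (sub (wpow u \<alpha>) (ge (fst (wpow u \<alpha>)) (pe i b)))
     (conc (sub u (ge (fst u) i)) (wpow u (Restr \<alpha> (aboveS \<alpha> b))))"
proof -
  let ?S1 = "(\<lambda>i'. pe i' b) ` ge (fst u) i" and ?S2 = "{pe i' b' | i' b'. i' \<in> F u \<and> b' \<in> aboveS \<alpha> b}"
  have AF: "aboveS \<alpha> b \<subseteq> Field \<alpha>" unfolding aboveS_def by (auto intro: FieldI2)
  have W: "WO (wpow u \<alpha>)" using wo_wpow[OF u a] .
  have S1: "?S1 \<subseteq> F (wpow u \<alpha>)" using u a b by (auto simp: ge_def)
  have S2: "?S2 \<subseteq> F (wpow u \<alpha>)" using u a AF by auto
  have 1: "word_iso (conc (sub (wpow u \<alpha>) ?S1) (sub (wpow u \<alpha>) ?S2)) (sub (wpow u \<alpha>) (?S1 \<union> ?S2))"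
  proof (rule split_iso[OF W S1 S2])
    fix p q assume "p \<in> ?S1" "q \<in> ?S2"
    then show "(p, q) \<in> fst (wpow u \<alpha>) \<and> p \<noteq> q" using b AF by (auto simp: aboveS_def ge_def)
  qed
  have 2: "sub (wpow u \<alpha>) ?S2 = wpow u (Restr \<alpha> (aboveS \<alpha> b))" using sub_wpow[OF u a AF] .
  have 3: "word_iso (sub (wpow u \<alpha>) ?S1) (sub u (ge (fst u) i))" using copy_iso[OF u a ge_Field b] .
  have 5: "word_iso (conc (sub (wpow u \<alpha>) ?S1) (sub (wpow u \<alpha>) ?S2))
     (conc (sub u (ge (fst u) i)) (wpow u (Restr \<alpha> (aboveS \<alpha> b))))"
    using word_iso_conc_l[OF 3] 2 by simp
  show ?thesis unfolding ge_pe[OF u a i b]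
    using word_iso_trans[OF word_iso_sym[OF 1] 5] .
qed

lemma sub_conc_r:
  assumes x: "WO x" and y: "WO y" and T: "T \<subseteq> F y"
  shows "word_iso (sub (conc x y) (sr ` T)) (sub y T)"
proof -
  have "sub (conc x y) (sl ` {} \<union> sr ` T) = conc (sub x {}) (sub y T)"
    using sub_conc[OF x y _ T] by blast
  then have "sub (conc x y) (sr ` T) = conc (sub x {}) (sub y T)" by simp
  moreover have "F (sub x {}) = {}" by (simp add: Field_def)
  ultimately show ?thesis using conc_empty_l by metis
qed

lemma sub_conc_l':
  assumes x: "WO x" and y: "WO y" and S: "S \<subseteq> F x"
  shows "word_iso (sub (conc x y) (sl ` S)) (sub x S)"
proof -
  have "sub (conc x y) (sl ` S \<union> sr ` {}) = conc (sub x S) (sub y {})"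
    using sub_conc[OF x y S] by blast
  then have "sub (conc x y) (sl ` S) = conc (sub x S) (sub y {})" by simp
  moreover have "F (sub y {}) = {}" by (simp add: Field_def)
  ultimately show ?thesis using conc_empty_r by metis
qed

lemma wo_min_ex:
  assumes r: "Well_order r" and ne: "Field r \<noteq> {}"
  obtains m where "m \<in> Field r" "\<And>a. a \<in> Field r \<Longrightarrow> (m, a) \<in> r"
  using wo_min[OF r subset_refl ne] by blast

lemma underS_min: "Well_order r \<Longrightarrow> (\<And>a. a \<in> Field r \<Longrightarrow> (m, a) \<in> r) \<Longrightarrow> underS r m = {}"
  unfolding underS_def using wo_antisym by (fastforce intro: FieldI1)

lemma ge_min: "(\<And>a. a \<in> Field r \<Longrightarrow> (m, a) \<in> r) \<Longrightarrow> ge r m = Field r"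
  unfolding ge_def by auto

lemma init_at_sr_min:
  assumes A: "WO A" and B: "WO B" and p: "p \<in> F B" and pm: "underS (fst B) p = {}"
  shows "word_iso (sub (conc A B) (underS (fst (conc A B)) (sr p))) A"
proof -
  have "underS (fst (conc A B)) (sr p) = sl ` F A"
    using underS_sr[OF p] pm by simp
  then show ?thesis using sub_conc_l[OF A B] by simp
qed

lemma subset_ordLeq:
  assumes R: "Well_order R" and S: "S \<subseteq> Field R"
  shows "Restr R S \<le>o R"
proof (rule ccontr)
  have RS: "Well_order (Restr R S)" using wo_Restr[OF R] .
  have FRS: "Field (Restr R S) = S" using Field_Restr_wo[OF R S] .
  assume "\<not> Restr R S \<le>o R"
  then have "R <o Restr R S" using not_ordLeq_iff_ordLess[OF R RS] by blast
  then obtain a where a: "a \<in> Field (Restr R S)" "R =o Restr (Restr R S) (underS (Restr R S) a)"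
    using ordLess_iff_ordIso_Restr[OF RS R] by blast
  let ?T = "underS (Restr R S) a"
  obtain f where f: "iso R (Restr (Restr R S) ?T) f" using a(2) unfolding ordIso_def by blast
  have TS: "?T \<subseteq> S" using uS_F[of "Restr R S" a] FRS by simp
  have FT: "Field (Restr (Restr R S) ?T) = ?T" using Field_Restr_wo[OF RS uS_F] .
  have f2: "bij_betw f (Field R) (Field (Restr (Restr R S) ?T)) \<and>
     (\<forall>x \<in> Field R. \<forall>y \<in> Field R. (x, y) \<in> R \<longleftrightarrow> (f x, f y) \<in> Restr (Restr R S) ?T)"
    using iso_iff2[THEN iffD1, OF f] .
  have bf: "bij_betw f (Field R) ?T" using conjunct1[OF f2] FT by simp
  have fo: "\<And>x y. x \<in> Field R \<Longrightarrow> y \<in> Field R \<Longrightarrow> (x, y) \<in> R \<longleftrightarrow> (f x, f y) \<in> Restr (Restr R S) ?T"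
    using conjunct2[OF f2] by blast
  have fT: "\<And>x. x \<in> Field R \<Longrightarrow> f x \<in> ?T" using bf bij_betwE by blast
  have aS: "a \<in> S" using a(1) FRS by simp
  have aR: "a \<in> Field R" using aS S by blast
  have "(a, f a) \<in> R"
  proof (rule wo_infl[OF R])
    show "\<And>x. x \<in> Field R \<Longrightarrow> f x \<in> Field R" using fT TS S by blast
    fix x y assume xy: "x \<in> Field R" "y \<in> Field R" "(x, y) \<in> R" "x \<noteq> y"
    have "(f x, f y) \<in> R" using fo[OF xy(1,2)] xy(3) by simp
    moreover have "f x \<noteq> f y" using bf xy unfolding bij_betw_def inj_on_def by blast
    ultimately show "(f x, f y) \<in> R \<and> f x \<noteq> f y" by simp
  qed (rule aR)
  moreover have "(f a, a) \<in> R" "f a \<noteq> a" using fT[OF aR] unfolding underS_def by auto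
  ultimately show False using wo_antisym[OF R] by blast
qed

lemma ordLeq_dc:
  assumes g: "Well_order \<gamma>" and le: "\<rho> \<le>o \<gamma>"
  obtains J where "dc \<gamma> J" "\<rho> =o Restr \<gamma> J"
proof (cases "\<rho> =o \<gamma>")
  case True
  have "\<gamma> = Restr \<gamma> (Field \<gamma>)" by (simp add: Restr_Field)
  then have "\<rho> =o Restr \<gamma> (Field \<gamma>)" using True by simp
  then show ?thesis using that[of "Field \<gamma>"] dc_Field by blast
next
  case False
  then have "\<rho> <o \<gamma>" using le ordLeq_iff_ordLess_or_ordIso by blast
  moreover have "Well_order \<rho>" using le unfolding ordLeq_def by blast
  ultimately obtain a where "a \<in> Field \<gamma>" "\<rho> =o Restr \<gamma> (underS \<gamma> a)"
    using ordLess_iff_ordIso_Restr[OF g] by blast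
  then show ?thesis using that dc_underS[OF g] by blast
qed

lemma iso_Restr_word:
  assumes x: "WO x" and y: "WO y" and A: "A \<subseteq> F y" and f: "iso (fst x) (Restr (fst y) A) f"
    and S: "S \<subseteq> F x" and l: "\<And>i. i \<in> S \<Longrightarrow> snd y (f i) = snd x i"
  shows "word_iso (sub x S) (sub y (f ` S))"
  unfolding word_iso_wisof
proof (intro exI)
  have FA: "Field (Restr (fst y) A) = A" using Field_Restr_wo[OF y A] .
  have bf: "bij_betw f (F x) A" and fo: "\<And>i j. i \<in> F x \<Longrightarrow> j \<in> F x \<Longrightarrow> (i, j) \<in> fst x \<longleftrightarrow> (f i, f j) \<in> Restr (fst y) A"
    using f FA unfolding iso_iff2 by auto
  have fA: "\<And>i. i \<in> F x \<Longrightarrow> f i \<in> A" using bf bij_betwE by blast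
  have fS: "f ` S \<subseteq> F y" using fA S A by blast
  show "wisof f (sub x S) (sub y (f ` S))"
    unfolding wisof_def Field_sub[OF x S] Field_sub[OF y fS]
  proof (intro conjI ballI)
    show "bij_betw f S (f ` S)" using bf S bij_betw_subset by blast
  next
    fix i j assume "i \<in> S" "j \<in> S"
    then show "(i, j) \<in> fst (sub x S) \<longleftrightarrow> (f i, f j) \<in> fst (sub y (f ` S))"
      using fo S fA by auto
  next
    fix i assume "i \<in> S" then show "snd (sub y (f ` S)) (f i) = snd (sub x S) i" using l by simp
  qed
qed

lemma tot_aux:
  assumes x: "WO x" and y: "WO y" and f: "embed (fst x) (fst y) f"
  shows "pref x y \<or> strp x y \<or> strp y x"
proof -
  let ?A = "f ` F x"
  have ofl: "ofilter (fst y) ?A" using embed_Field_ofilter[OF x y f] by simp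
  have dcA: "dc (fst y) ?A" using ofl unfolding ofilter_def dc_def under_def by blast
  have AF: "?A \<subseteq> F y" using dc_sub[OF dcA] .
  have fi: "iso (fst x) (Restr (fst y) ?A) f" using embed_implies_iso_Restr[OF y x f] .
  have FA: "Field (Restr (fst y) ?A) = ?A" using Field_Restr_wo[OF y AF] .
  have f2: "bij_betw f (F x) (Field (Restr (fst y) ?A)) \<and>
     (\<forall>i \<in> F x. \<forall>j \<in> F x. (i, j) \<in> fst x \<longleftrightarrow> (f i, f j) \<in> Restr (fst y) ?A)"
    using iso_iff2[THEN iffD1, OF fi] .
  have bf: "bij_betw f (F x) ?A" using conjunct1[OF f2] FA by simp
  have fo: "\<And>i j. i \<in> F x \<Longrightarrow> j \<in> F x \<Longrightarrow> (i, j) \<in> fst x \<longleftrightarrow> (f i, f j) \<in> fst y"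
    using conjunct2[OF f2] by blast
  define D where "D = {p \<in> F x. snd y (f p) \<noteq> snd x p}"
  show ?thesis
  proof (cases "D = {}")
    case True
    have "\<And>i. i \<in> F x \<Longrightarrow> snd y (f i) = snd x i" using True unfolding D_def by auto
    then have "word_iso (sub x (F x)) (sub y ?A)"
      using iso_Restr_word[OF x y AF fi subset_refl] by blast
    then have "word_iso x (sub y ?A)" by simp
    then have "pref x y" using pref_dc[OF y] dcA by blast
    then show ?thesis by simp
  next
    case False
    have DF: "D \<subseteq> F x" unfolding D_def by auto
    obtain p where p: "p \<in> D" "\<And>q. q \<in> D \<Longrightarrow> (p, q) \<in> fst x"
      using wo_min[OF x DF False] by blast
    have pF: "p \<in> F x" using p(1) DF by blast
    have agree: "\<And>i. i \<in> underS (fst x) p \<Longrightarrow> snd y (f i) = snd x i"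
    proof (rule ccontr)
      fix i assume i: "i \<in> underS (fst x) p" and ne: "snd y (f i) \<noteq> snd x i"
      have "i \<in> F x" using i by (rule uS_mem)
      then have "i \<in> D" using ne unfolding D_def by auto
      then have "(p, i) \<in> fst x" using p by blast
      then show False using i wo_antisym[OF x] unfolding underS_def by blast
    qed
    have 1: "word_iso (sub x (underS (fst x) p)) (sub y (f ` underS (fst x) p))"
      using iso_Restr_word[OF x y AF fi uS_F agree] .
    have 2: "f ` underS (fst x) p = underS (fst y) (f p)"
    proof
      show "f ` underS (fst x) p \<subseteq> underS (fst y) (f p)"
      proof
        fix b assume "b \<in> f ` underS (fst x) p"
        then obtain a where a: "a \<in> underS (fst x) p" "b = f a" by blast
        have aF: "a \<in> F x" using a(1) by (rule uS_mem)
        have "(f a, f p) \<in> fst y" using fo[OF aF pF] a(1) unfolding underS_def by auto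
        moreover have "f a \<noteq> f p" using bf aF pF a(1) unfolding bij_betw_def inj_on_def underS_def by auto
        ultimately show "b \<in> underS (fst y) (f p)" using a unfolding underS_def by auto
      qed
      show "underS (fst y) (f p) \<subseteq> f ` underS (fst x) p"
      proof
        fix b assume b: "b \<in> underS (fst y) (f p)"
        have "f p \<in> ?A" using pF by blast
        then have "b \<in> ?A" using dc_down[OF dcA] b unfolding underS_def by blast
        then obtain a where a: "a \<in> F x" "b = f a" by blast
        have "(a, p) \<in> fst x" "a \<noteq> p" using b a fo[OF a(1) pF] unfolding underS_def by auto
        then show "b \<in> f ` underS (fst x) p" using a unfolding underS_def by auto
      qed
    qed
    have 3: "word_iso (sub x (underS (fst x) p)) (sub y (underS (fst y) (f p)))" using 1 2 by simp
    have fpF: "f p \<in> F y" using pF AF by blast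
    have "snd y (f p) \<noteq> snd x p" using p(1) unfolding D_def by auto
    then have "snd x p < snd y (f p) \<or> snd y (f p) < snd x p" by auto
    then show ?thesis
    proof
      assume "snd x p < snd y (f p)" then show ?thesis using strpI[OF pF fpF 3] by blast
    next
      assume "snd y (f p) < snd x p" then show ?thesis using strpI[OF fpF pF word_iso_sym[OF 3]] by blast
    qed
  qed
qed

lemma totality:
  assumes x: "WO x" and y: "WO y"
  shows "pref x y \<or> pref y x \<or> strp x y \<or> strp y x"
  using wellorders_totally_ordered[OF x y] tot_aux[OF x y] tot_aux[OF y x] by blast

lemma suffix_of_conc:
  assumes v: "WO v" and A: "WO A" and B: "WO B" and An: "F A \<noteq> {}" and Bn: "F B \<noteq> {}"
    and i: "word_iso v (conc A B)"
  obtains g j where "g \<in> F v" "j \<in> F v" "(j, g) \<in> fst v" "j \<noteq> g" "word_iso (sub v (ge (fst v) g)) B"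
proof -
  let ?C = "conc A B"
  have C: "WO ?C" using wo_conc[OF A B] .
  obtain f where f: "wisof f ?C v" using word_iso_sym[OF i] word_iso_wisof by blast
  obtain m where m: "m \<in> F B" "\<And>a. a \<in> F B \<Longrightarrow> (m, a) \<in> fst B" using wo_min_ex[OF B Bn] by blast
  obtain a where a: "a \<in> F A" using An by blast
  have G: "sr m \<in> F ?C" and I: "sl a \<in> F ?C" using m a F_conc by auto
  have ge: "ge (fst ?C) (sr m) = sr ` F B" using ge_sr ge_min[of "fst B" m] m by simp
  have 1: "word_iso (sub ?C (ge (fst ?C) (sr m))) B" unfolding ge using sub_conc_r[OF A B subset_refl] by simp
  have 2: "word_iso (sub ?C (ge (fst ?C) (sr m))) (sub v (ge (fst v) (f (sr m))))" using iso_final[OF f C G] .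
  have 3: "(f (sl a), f (sr m)) \<in> fst v" using wisof_props(2)[OF f I G] a m by simp
  have 4: "f (sl a) \<noteq> f (sr m)" using inj_onD[OF wisof_props(5)[OF f] _ I G] by auto
  have 5: "word_iso (sub v (ge (fst v) (f (sr m)))) B" using word_iso_trans[OF word_iso_sym[OF 2] 1] .
  show ?thesis
    using that[OF wisof_props(4)[OF f G] wisof_props(4)[OF f I] 3 4 5] .
qed




lemma M:
  assumes u: "WO u" and x: "WO x" and t: "WO t" and t': "WO t'" and su: "strp u x"
    and tau: "Well_order \<tau>" and lt: "\<sigma> <o \<tau>"
  shows "strp (conc (wpow u \<tau>) (conc x t)) (conc (wpow u \<sigma>) (conc x t'))"
proof -
  obtain pu px where pp: "pu \<in> F u" "px \<in> F x"
    "word_iso (sub u (underS (fst u) pu)) (sub x (underS (fst x) px))" "snd u pu < snd x px"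
    using su unfolding strp_def by blast
  have sig: "Well_order \<sigma>" using lt unfolding ordLess_def by blast
  obtain a where a: "a \<in> Field \<tau>" "\<sigma> =o Restr \<tau> (underS \<tau> a)"
    using ordLess_iff_ordIso_Restr[OF tau sig] lt by blast
  let ?Wt = "wpow u \<tau>" and ?Ws = "wpow u \<sigma>"
  let ?L = "conc ?Wt (conc x t)" and ?R = "conc ?Ws (conc x t')"
  have Wt: "WO ?Wt" using wo_wpow[OF u tau] .
  have Ws: "WO ?Ws" using wo_wpow[OF u sig] .
  have xt: "WO (conc x t)" using wo_conc[OF x t] .
  have xt': "WO (conc x t')" using wo_conc[OF x t'] .
  let ?P = "sl (pe pu a)" and ?Q = "sr (sl px)"
  have PF: "?P \<in> F ?L" using pp(1) a(1) u tau F_conc by auto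
  have QF: "?Q \<in> F ?R" using pp(2) F_conc by auto
  have uP: "underS (fst ?L) ?P = sl ` underS (fst ?Wt) (pe pu a)" using underS_sl by simp
  have 1: "word_iso (sub ?L (underS (fst ?L) ?P)) (sub ?Wt (underS (fst ?Wt) (pe pu a)))"
    unfolding uP using sub_conc_l'[OF Wt xt uS_F] .
  have 2: "word_iso (sub ?Wt (underS (fst ?Wt) (pe pu a))) (conc (wpow u (Restr \<tau> (underS \<tau> a))) (sub u (underS (fst u) pu)))"
    using init_wpow[OF u tau pp(1) a(1)] .
  have 3: "word_iso (wpow u (Restr \<tau> (underS \<tau> a))) ?Ws"
    using wpow_exp_iso[OF u ordIso_symmetric[OF a(2)]] .
  have 4: "word_iso (sub ?L (underS (fst ?L) ?P)) (conc ?Ws (sub x (underS (fst x) px)))"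
    using word_iso_trans[OF word_iso_trans[OF 1 2] word_iso_conc[OF 3 pp(3)]] .
  have slF: "sl px \<in> Field (rsum (fst x) (fst t'))" using pp(2) Field_rsum by auto
  have uQ: "underS (fst ?R) ?Q = sl ` F ?Ws \<union> sr ` (sl ` underS (fst x) px)"
    using underS_sr[OF slF] underS_sl by simp
  have 5: "sub ?R (sl ` F ?Ws \<union> sr ` (sl ` underS (fst x) px)) = conc ?Ws (sub (conc x t') (sl ` underS (fst x) px))"
  proof -
    have "sl ` underS (fst x) px \<subseteq> sl ` F x" by (rule image_mono[OF uS_F])
    then have T: "sl ` underS (fst x) px \<subseteq> F (conc x t')" unfolding F_conc by blast
    have "sub ?R (sl ` F ?Ws \<union> sr ` (sl ` underS (fst x) px)) = conc (sub ?Ws (F ?Ws)) (sub (conc x t') (sl ` underS (fst x) px))"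
      using sub_conc[OF Ws xt' subset_refl T] .
    then show ?thesis by (simp only: sub_Field)
  qed
  have 6: "word_iso (sub ?R (underS (fst ?R) ?Q)) (conc ?Ws (sub x (underS (fst x) px)))"
    unfolding uQ 5 using word_iso_conc_r[OF sub_conc_l'[OF x t' uS_F]] .
  have 7: "word_iso (sub ?L (underS (fst ?L) ?P)) (sub ?R (underS (fst ?R) ?Q))"
    using word_iso_trans[OF 4 word_iso_sym[OF 6]] .
  have 8: "snd ?L ?P < snd ?R ?Q" using pp(4) by simp
  show ?thesis using strpI[OF PF QF 7 8] .
qed

lemma conc_shift:
  assumes u: "WO u" and v: "WO v" and x: "WO x" and tw: "WO tw" and eta: "Well_order \<eta>" and a: "Well_order \<alpha>"
    and hv: "word_iso v (conc (wpow u \<eta>) x)"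
  shows "word_iso (conc (wpow u \<alpha>) (conc v tw)) (conc (wpow u (rsum \<alpha> \<eta>)) (conc x tw))"
proof -
  have 1: "word_iso (conc (wpow u \<alpha>) (conc v tw)) (conc (wpow u \<alpha>) (conc (conc (wpow u \<eta>) x) tw))"
    using word_iso_conc_r[OF word_iso_conc_l[OF hv]] .
  have 2: "word_iso (conc (wpow u \<alpha>) (conc (conc (wpow u \<eta>) x) tw)) (conc (wpow u \<alpha>) (conc (wpow u \<eta>) (conc x tw)))"
    using word_iso_conc_r[OF conc_assoc] .
  have 3: "word_iso (conc (wpow u \<alpha>) (conc (wpow u \<eta>) (conc x tw))) (conc (conc (wpow u \<alpha>) (wpow u \<eta>)) (conc x tw))"
    using word_iso_sym[OF conc_assoc] .
  have 4: "word_iso (conc (conc (wpow u \<alpha>) (wpow u \<eta>)) (conc x tw)) (conc (wpow u (rsum \<alpha> \<eta>)) (conc x tw))"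
    using word_iso_conc_l[OF wpow_rsum[OF u a eta]] .
  show ?thesis using word_iso_trans[OF word_iso_trans[OF word_iso_trans[OF 1 2] 3] 4] .
qed

lemma prime_wo: "prime_word w \<Longrightarrow> WO w"
  unfolding prime_word_def primitive_def is_word_def by blast

lemma F_wpow_empty: "F (wpow u {}) = {}"
  unfolding wpow_def Field_def by auto

lemma prim_nonempty:
  assumes p: "primitive x" shows "F x \<noteq> {}"
proof
  assume e: "F x = {}"
  have "word_iso x (wpow x {})" using iso_empty[OF e F_wpow_empty] .
  moreover have "is_word x" using p primitive_def by blast
  moreover have "is_ord {}" unfolding is_ord_def by (rule wo_empty)
  ultimately have "ord_eq {} ord_one" using p unfolding primitive_def by blast
  then show False unfolding ord_eq_def word_iso_def ord_one_def by (auto simp: bij_betw_def Field_def)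
qed

lemma prim_contra:
  assumes pv: "primitive v" and ne: "\<not> word_iso u v" and u: "WO u" and s: "Well_order \<sigma>"
    and i: "word_iso v (wpow u \<sigma>)"
  shows False
proof -
  have "is_word u" "is_ord \<sigma>" using u s unfolding is_word_def is_ord_def by auto
  then have "word_iso u v" using pv i unfolding primitive_def by blast
  then show False using ne by simp
qed

lemma ge_compl:
  assumes v: "WO v" and p: "p \<in> F v" shows "F v - underS (fst v) p = ge (fst v) p"
proof (rule set_eqI)
  fix b show "b \<in> F v - underS (fst v) p \<longleftrightarrow> b \<in> ge (fst v) p"
  proof
    assume b: "b \<in> F v - underS (fst v) p"
    then have "(b, p) \<notin> fst v \<or> b = p" unfolding underS_def by auto
    then have "(p, b) \<in> fst v" using wo_total[OF v _ p, of b] wo_refl[OF v p] b by auto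
    then show "b \<in> ge (fst v) p" using b unfolding ge_def by auto
  next
    assume b: "b \<in> ge (fst v) p"
    then have "(p, b) \<in> fst v" "b \<in> F v" unfolding ge_def by auto
    moreover have "b \<notin> underS (fst v) p" using wo_antisym[OF v] calculation(1) unfolding underS_def by auto
    ultimately show "b \<in> F v - underS (fst v) p" by simp
  qed
qed

lemma split_at:
  assumes v: "WO v" and p: "p \<in> F v"
  shows "word_iso v (conc (sub v (underS (fst v) p)) (sub v (ge (fst v) p)))"
  using dc_split[OF v dc_underS[OF v], of p] ge_compl[OF v p] by simp

lemma xinit:
  assumes A: "WO A" and v: "WO v" and p: "p \<in> F v"
  defines "X \<equiv> conc A (sub v (ge (fst v) p))"
  shows "sr p \<in> F X" "snd X (sr p) = snd v p" "word_iso (sub X (underS (fst X) (sr p))) A"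
proof -
  have gF: "ge (fst v) p \<subseteq> F v" by (rule ge_Field)
  have Fs: "F (sub v (ge (fst v) p)) = ge (fst v) p" using Field_sub[OF v gF] .
  have pg: "p \<in> ge (fst v) p" unfolding ge_def using p wo_refl[OF v p] by simp
  show "sr p \<in> F X" unfolding X_def F_conc Fs using pg by simp
  show "snd X (sr p) = snd v p" unfolding X_def by simp
  have "underS (fst (sub v (ge (fst v) p))) p = {}"
    unfolding underS_def ge_def using wo_antisym[OF v] by auto
  then show "word_iso (sub X (underS (fst X) (sr p))) A"
    unfolding X_def using init_at_sr_min[OF A wo_sub[OF v] _] Fs pg by simp
qed

lemma D_aux:
  assumes u: "WO u" and v: "WO v" and g: "g \<in> F u" and e: "e \<in> F v" and p: "p \<in> F v"
    and i: "word_iso (sub v (underS (fst v) p)) (sub (wpow u (fst v)) (underS (fst (wpow u (fst v))) (pe g e)))"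
  shows "word_iso v (conc (wpow u (Restr (fst v) (underS (fst v) e)))
            (conc (sub u (underS (fst u) g)) (sub v (ge (fst v) p))))"
proof -
  let ?\<eta> = "Restr (fst v) (underS (fst v) e)"
  have 1: "word_iso (sub v (underS (fst v) p)) (conc (wpow u ?\<eta>) (sub u (underS (fst u) g)))"
    using word_iso_trans[OF i init_wpow[OF u v g e]] .
  have 2: "word_iso v (conc (conc (wpow u ?\<eta>) (sub u (underS (fst u) g))) (sub v (ge (fst v) p)))"
    using word_iso_trans[OF split_at[OF v p] word_iso_conc_l[OF 1]] .
  show ?thesis using word_iso_trans[OF 2 conc_assoc] .
qed




lemma prime_prim: "prime_word w \<Longrightarrow> primitive w"
  unfolding prime_word_def by blast

lemma pref_sub_underS:
  assumes q: "q \<in> F u" shows "pref (sub u (underS (fst u) q)) u"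
proof -
  have "\<exists>qa\<in>F u. word_iso (sub u (underS (fst u) q)) (sub u (underS (fst u) qa))"
    using q word_iso_refl by blast
  then show ?thesis unfolding pref_def by blast
qed

lemma D:
  assumes pu: "prime_word u" and pv: "prime_word v" and lex: "lex_le u v" and ne: "\<not> word_iso u v"
  shows "\<exists>\<eta> x. Well_order \<eta> \<and> WO x \<and> word_iso v (conc (wpow u \<eta>) x) \<and> strp u x"
proof -
  have u: "WO u" using prime_wo[OF pu] .
  have v: "WO v" using prime_wo[OF pv] .
  have un: "F u \<noteq> {}" using prim_nonempty[OF prime_prim[OF pu]] .
  have vn: "F v \<noteq> {}" using prim_nonempty[OF prime_prim[OF pv]] .
  have contra: "\<And>\<sigma>. Well_order \<sigma> \<Longrightarrow> word_iso v (wpow u \<sigma>) \<Longrightarrow> False"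
    using prim_contra[OF prime_prim[OF pv] ne u] by blast
  have lu: "pref u v \<or> strp u v" using lex lex_le_iff[OF u v] by blast
  show ?thesis
  proof (cases "strp u v")
    case True
    have "word_iso v (conc (wpow u {}) v)" using word_iso_sym[OF conc_empty_l[OF F_wpow_empty]] .
    then show ?thesis using True wo_empty v by blast
  next
    case False
    then have puv: "pref u v" using lu by blast
    let ?\<rho> = "fst v"
    let ?U = "wpow u ?\<rho>"
    have U: "WO ?U" using wo_wpow[OF u v] .
    have FU: "\<And>q. q \<in> F ?U \<Longrightarrow> \<exists>g e. q = pe g e \<and> g \<in> F u \<and> e \<in> F v"
      using Field_wpow[OF u v] by blast
    have case_b: False if pvU: "pref v ?U"
    proof -
      show False
      proof (cases "word_iso v ?U")
        case True then show False using contra[OF v] by blast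
      next
        case False
        then obtain q where q: "q \<in> F ?U" "word_iso v (sub ?U (underS (fst ?U) q))" using pvU pref_def by blast
        obtain g e where ge: "q = pe g e" "g \<in> F u" "e \<in> F v" using FU[OF q(1)] by blast
        let ?\<eta> = "Restr ?\<rho> (underS ?\<rho> e)"
        let ?u' = "sub u (underS (fst u) g)"
        have eta: "Well_order ?\<eta>" using wo_Restr[OF v] .
        have u': "WO ?u'" using wo_sub[OF u] .
        have i1: "word_iso v (conc (wpow u ?\<eta>) ?u')"
          using word_iso_trans[OF q(2)[unfolded ge(1)] init_wpow[OF u v ge(2,3)]] .
        show False
        proof (cases "F ?u' = {}")
          case True
          then have "word_iso v (wpow u ?\<eta>)" using word_iso_trans[OF i1 conc_empty_r] by blast
          then show False using contra[OF eta] by blast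
        next
          case False
          have pu'u: "pref ?u' u" using pref_sub_underS[OF ge(2)] .
          have nu: "\<not> word_iso u ?u'" using not_iso_underS[OF u ge(2)] .
          have no_pref: "\<not> pref u ?u'" using pref_antisym[OF u u' _ pu'u] nu by blast
          show False
          proof (cases "F (wpow u ?\<eta>) = {}")
            case True
            then have "word_iso v ?u'" using word_iso_trans[OF i1 conc_empty_l] by blast
            then have "pref u ?u'" using pref_iso_r[OF v _ puv] by blast
            then show False using no_pref by blast
          next
            case False
            have W: "WO (wpow u ?\<eta>)" using wo_wpow[OF u eta] .
            obtain g' j where gj: "g' \<in> F v" "j \<in> F v" "(j, g') \<in> fst v" "j \<noteq> g'"
                "word_iso (sub v (ge (fst v) g')) ?u'"
              using suffix_of_conc[OF v W u' False \<open>F ?u' \<noteq> {}\<close> i1] by blast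
            let ?s = "sub v (ge (fst v) g')"
            have s: "WO ?s" using wo_sub[OF v] .
            have "pref v ?s \<or> strp v ?s" using prime_suffix[OF pv v gj(1-4)] .
            then show False
            proof
              assume "pref v ?s"
              then have "pref v ?u'" using pref_iso_r[OF s gj(5)] by blast
              then have "pref u ?u'" using pref_trans[OF v u' puv] by blast
              then show False using no_pref by blast
            next
              assume "strp v ?s"
              then have "strp v ?u'" using strp_iso[OF v s _ word_iso_refl gj(5)] by blast
              moreover have "pref ?u' v" using pref_trans[OF u v pu'u puv] .
              ultimately show False using strp_pref_contra1[OF v u'] by blast
            qed
          qed
        qed
      qed
    qed
    have case_a: False if pUv: "pref ?U v"
    proof -
      obtain S where S: "dc (fst v) S" "word_iso ?U (sub v S)" using pUv pref_dc[OF v] by blast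
      obtain psi where psi: "wisof psi ?U (sub v S)" using S(2) word_iso_wisof by blast
      have SF: "S \<subseteq> F v" using dc_sub[OF S(1)] .
      have FS: "F (sub v S) = S" using Field_sub[OF v SF] .
      obtain m where m: "m \<in> F u" using un by blast
      define h where "h b = psi (pe m b)" for b
      have hS: "\<And>b. b \<in> F v \<Longrightarrow> h b \<in> S"
        unfolding h_def using wisof_props(4)[OF psi] FS m u v by auto
      have "S = F v"
      proof
        show "S \<subseteq> F v" using SF .
        show "F v \<subseteq> S"
        proof
          fix b assume b: "b \<in> F v"
          have "(b, h b) \<in> fst v"
          proof (rule wo_infl[OF v])
            show "\<And>a. a \<in> F v \<Longrightarrow> h a \<in> F v" using hS SF by blast
            fix a c assume ac: "a \<in> F v" "c \<in> F v" "(a, c) \<in> fst v" "a \<noteq> c"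
            have mem: "pe m a \<in> F ?U" "pe m c \<in> F ?U" using m ac u v by auto
            have "(pe m a, pe m c) \<in> fst ?U" using m ac by auto
            then have "(h a, h c) \<in> fst (sub v S)" unfolding h_def using wisof_props(2)[OF psi mem] by blast
            moreover have "h a \<noteq> h c" unfolding h_def using inj_onD[OF wisof_props(5)[OF psi] _ mem] ac(4) by auto
            ultimately show "(h a, h c) \<in> fst v \<and> h a \<noteq> h c" by auto
          qed (rule b)
          then show "b \<in> S" using dc_down[OF S(1) hS[OF b]] by blast
        qed
      qed
      then have "word_iso ?U v" using S(2) by simp
      then show False using contra[OF v] word_iso_sym by blast
    qed
    have case_c: False if svU: "strp v ?U"
    proof -
      obtain p q where pq: "p \<in> F v" "q \<in> F ?U" "word_iso (sub v (underS (fst v) p)) (sub ?U (underS (fst ?U) q))"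
        "snd v p < snd ?U q" using svU unfolding strp_def by blast
      obtain g e where ge: "q = pe g e" "g \<in> F u" "e \<in> F v" using FU[OF pq(2)] by blast
      let ?\<eta> = "Restr ?\<rho> (underS ?\<rho> e)"
      let ?u' = "sub u (underS (fst u) g)"
      let ?x = "conc ?u' (sub v (ge (fst v) p))"
      have eta: "Well_order ?\<eta>" using wo_Restr[OF v] .
      have u': "WO ?u'" using wo_sub[OF u] .
      have x: "WO ?x" using wo_conc[OF u' wo_sub[OF v]] .
      have dec: "word_iso v (conc (wpow u ?\<eta>) ?x)" using D_aux[OF u v ge(2,3) pq(1) pq(3)[unfolded ge(1)]] .
      note xi = xinit[OF u' v pq(1)]
      have sxu: "strp ?x u"
      proof (rule strpI[OF xi(1) ge(2)])
        show "word_iso (sub ?x (underS (fst ?x) (sr p))) (sub u (underS (fst u) g))" using xi(3) .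
        show "snd ?x (sr p) < snd u g" using xi(2) pq(4) ge(1) by simp
      qed
      show False
      proof (cases "F (wpow u ?\<eta>) = {}")
        case True
        then have "word_iso v ?x" using word_iso_trans[OF dec conc_empty_l] by blast
        then have "strp v u" using strp_iso[OF x u sxu word_iso_sym word_iso_refl] by blast
        then show False using strp_pref_contra1[OF v u _ puv] by blast
      next
        case False
        have W: "WO (wpow u ?\<eta>)" using wo_wpow[OF u eta] .
        have xn: "F ?x \<noteq> {}" using xi(1) by blast
        obtain g' j where gj: "g' \<in> F v" "j \<in> F v" "(j, g') \<in> fst v" "j \<noteq> g'"
            "word_iso (sub v (ge (fst v) g')) ?x"
          using suffix_of_conc[OF v W x False xn dec] by blast
        let ?s = "sub v (ge (fst v) g')"
        have s: "WO ?s" using wo_sub[OF v] .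
        have "pref v ?s \<or> strp v ?s" using prime_suffix[OF pv v gj(1-4)] .
        then show False
        proof
          assume "pref v ?s"
          then have pvx: "pref v ?x" using pref_iso_r[OF s gj(5)] by blast
          have "strp ?x v" using strp_pref_r[OF x u v sxu puv] .
          then show False using strp_pref_contra1[OF x v _ pvx] by blast
        next
          assume "strp v ?s"
          then have "strp v ?x" using strp_iso[OF v s _ word_iso_refl gj(5)] by blast
          then have "strp v u" using strp_trans[OF v x u _ sxu] by blast
          then show False using strp_pref_contra1[OF v u _ puv] by blast
        qed
      qed
    qed
    have "pref v ?U \<or> pref ?U v \<or> strp v ?U \<or> strp ?U v" using totality[OF v U] .
    then have "strp ?U v" using case_a case_b case_c by blast
    then obtain q p where pq: "q \<in> F ?U" "p \<in> F v" "word_iso (sub ?U (underS (fst ?U) q)) (sub v (underS (fst v) p))"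
        "snd ?U q < snd v p" unfolding strp_def by blast
    obtain g e where ge: "q = pe g e" "g \<in> F u" "e \<in> F v" using FU[OF pq(1)] by blast
    let ?\<eta> = "Restr ?\<rho> (underS ?\<rho> e)"
    let ?u' = "sub u (underS (fst u) g)"
    let ?x = "conc ?u' (sub v (ge (fst v) p))"
    have eta: "Well_order ?\<eta>" using wo_Restr[OF v] .
    have u': "WO ?u'" using wo_sub[OF u] .
    have x: "WO ?x" using wo_conc[OF u' wo_sub[OF v]] .
    have dec: "word_iso v (conc (wpow u ?\<eta>) ?x)"
      using D_aux[OF u v ge(2,3) pq(2) word_iso_sym[OF pq(3)[unfolded ge(1)]]] .
    note xi = xinit[OF u' v pq(2)]
    have "strp u ?x"
    proof (rule strpI[OF ge(2) xi(1)])
      show "word_iso (sub u (underS (fst u) g)) (sub ?x (underS (fst ?x) (sr p)))" using word_iso_sym[OF xi(3)] .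
      show "snd u g < snd ?x (sr p)" using xi(2) pq(4) ge(1) by simp
    qed
    then show ?thesis using eta x dec by blast
  qed
qed




lemma tail_dec:
  assumes v: "WO v" and b: "Well_order \<beta>" and c0: "c0 \<in> Field \<beta>" "\<And>c. c \<in> Field \<beta> \<Longrightarrow> (c0, c) \<in> \<beta>"
  shows "word_iso (wpow v \<beta>) (conc v (wpow v (Restr \<beta> (Field \<beta> - {c0}))))"
proof -
  have 1: "word_iso (conc (wpow v (Restr \<beta> {c0})) (wpow v (Restr \<beta> (Field \<beta> - {c0}))))
      (wpow v (Restr \<beta> ({c0} \<union> (Field \<beta> - {c0}))))"
    by (rule power_split[OF v b]) (use c0 in auto)
  have 2: "Restr \<beta> ({c0} \<union> (Field \<beta> - {c0})) = \<beta>" using c0(1) Restr_Field[of \<beta>] by (simp add: insert_absorb)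
  have 3: "word_iso (conc (wpow v (Restr \<beta> {c0})) (wpow v (Restr \<beta> (Field \<beta> - {c0}))))
      (conc v (wpow v (Restr \<beta> (Field \<beta> - {c0}))))"
    using word_iso_conc_l[OF wpow_single[OF v b c0(1)]] .
  show ?thesis using word_iso_trans[OF word_iso_sym[OF 1[unfolded 2]] 3] .
qed

lemma rsum_Restr_eq:
  assumes a: "Well_order \<alpha>" and A: "A \<subseteq> Field \<alpha>" and e: "Well_order \<eta>"
  shows "rsum (Restr \<alpha> A) \<eta> = Restr (rsum \<alpha> \<eta>) (sl ` A \<union> sr ` Field \<eta>)"
proof -
  have FA: "Field (Restr \<alpha> A) = A" using Field_Restr_wo[OF a A] .
  show ?thesis
  proof (rule set_eqI)
    fix p :: "nat \<times> nat"
    obtain n m where p: "p = (n, m)" by fastforce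
    show "p \<in> rsum (Restr \<alpha> A) \<eta> \<longleftrightarrow> p \<in> Restr (rsum \<alpha> \<eta>) (sl ` A \<union> sr ` Field \<eta>)"
      unfolding p
      by (cases n rule: nat_cases_sum; cases m rule: nat_cases_sum) (use A FA in \<open>auto intro: FieldI1 FieldI2\<close>)
  qed
qed

lemma pref_sub_iso:
  assumes u: "WO u" and T: "T \<subseteq> F u" and p: "pref u (sub u T)"
  shows "word_iso u (sub u T)"
proof -
  have s: "WO (sub u T)" using wo_sub[OF u] .
  have FT: "F (sub u T) = T" using Field_sub[OF u T] .
  obtain S where S: "dc (fst (sub u T)) S" "word_iso u (sub (sub u T) S)" using p pref_dc[OF s] by blast
  have ST: "S \<subseteq> T" using dc_sub[OF S(1)] FT by simp
  have e: "sub (sub u T) S = sub u S" using sub_sub ST by (metis inf.absorb2)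
  obtain psi where psi: "wisof psi u (sub u S)" using S(2) e word_iso_wisof by metis
  have SF: "S \<subseteq> F u" using ST T by blast
  have FS: "F (sub u S) = S" using Field_sub[OF u SF] .
  have pS: "\<And>a. a \<in> F u \<Longrightarrow> psi a \<in> S" using wisof_props(4)[OF psi] FS by auto
  have "T \<subseteq> S"
  proof
    fix b assume bT: "b \<in> T"
    have bF: "b \<in> F u" using bT T by blast
    have "(b, psi b) \<in> fst u"
    proof (rule wo_infl[OF u])
      show "\<And>a. a \<in> F u \<Longrightarrow> psi a \<in> F u" using pS SF by blast
      fix a c assume ac: "a \<in> F u" "c \<in> F u" "(a, c) \<in> fst u" "a \<noteq> c"
      have "(psi a, psi c) \<in> fst (sub u S)" using wisof_props(2)[OF psi ac(1,2)] ac(3) by blast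
      moreover have "psi a \<noteq> psi c" using inj_onD[OF wisof_props(5)[OF psi] _ ac(1,2)] ac(4) by auto
      ultimately show "(psi a, psi c) \<in> fst u \<and> psi a \<noteq> psi c" by auto
    qed (rule bF)
    then have "(b, psi b) \<in> fst (sub u T)" using bT pS[OF bF] ST by auto
    then show "b \<in> S" using dc_down[OF S(1) pS[OF bF]] by blast
  qed
  then have "S = T" using ST by blast
  then show ?thesis using S(2) e by simp
qed

lemma not_min_or_min:
  assumes r: "Well_order r" and j: "j \<in> Field r" and nm: "\<not> (\<exists>i\<in>Field r. (i, j) \<in> r \<and> i \<noteq> j)"
  shows "\<And>a. a \<in> Field r \<Longrightarrow> (j, a) \<in> r"
  using wo_total[OF r] j nm by blast

lemma ord_eq_one:
  assumes g: "Well_order \<gamma>" and e: "Field \<gamma> = {e0}" shows "ord_eq \<gamma> ord_one"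
  unfolding ord_eq_def word_iso_def
proof (intro exI conjI ballI)
  show "bij_betw (\<lambda>_. 0) (Field (fst (\<gamma>, \<lambda>_. ()))) (Field (fst (ord_one, \<lambda>_. ())))"
    using e Field_one by (auto simp: bij_betw_def)
  fix i j assume "i \<in> Field (fst (\<gamma>, \<lambda>_. ()))" "j \<in> Field (fst (\<gamma>, \<lambda>_. ()))"
  then show "(i, j) \<in> fst (\<gamma>, \<lambda>_. ()) \<longleftrightarrow> (0, 0) \<in> fst (ord_one, \<lambda>_. ())"
    using e wo_refl[OF g, of e0] by (auto simp: ord_one_def)
qed simp




lemma prim_from_suffix:
  assumes W: "WO W" and Wn: "F W \<noteq> {}"
    and sufall: "\<And>g i. g \<in> F W \<Longrightarrow> i \<in> F W \<Longrightarrow> (i, g) \<in> fst W \<Longrightarrow> i \<noteq> g \<Longrightarrow>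
        strp W (sub W (ge (fst W) g)) \<or> word_iso W (sub W (ge (fst W) g))"
    and g0: "g0 \<in> F W"
    and after: "\<And>g. g \<in> F W \<Longrightarrow> (g0, g) \<in> fst W \<Longrightarrow> strp W (sub W (ge (fst W) g))"
  shows "primitive W"
  unfolding primitive_def
proof (rule conjI)
  show "is_word W" using W unfolding is_word_def by blast
next
  show "\<forall>y \<gamma>. is_word y \<and> is_ord \<gamma> \<and> word_iso W (wpow y \<gamma>) \<longrightarrow> ord_eq \<gamma> ord_one \<and> word_iso y W"
  proof (intro allI impI)
  fix y \<gamma> assume asm: "is_word y \<and> is_ord \<gamma> \<and> word_iso W (wpow y \<gamma>)"
  have y: "WO y" and g: "Well_order \<gamma>" using asm unfolding is_word_def is_ord_def by auto
  let ?Y = "wpow y \<gamma>"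
  have Y: "WO ?Y" using wo_wpow[OF y g] .
  obtain f where f: "wisof f W ?Y" using asm word_iso_wisof by blast
  have FY: "F ?Y = {pe i b | i b. i \<in> F y \<and> b \<in> Field \<gamma>}" using Field_wpow[OF y g] .
  have Yn: "F ?Y \<noteq> {}" using wisof_props(6)[OF f] Wn by auto
  have yn: "F y \<noteq> {}" and gn: "Field \<gamma> \<noteq> {}" using Yn FY by auto
  obtain my where my: "my \<in> F y" "\<And>a. a \<in> F y \<Longrightarrow> (my, a) \<in> fst y" using wo_min_ex[OF y yn] by blast
  obtain e0 where e0: "e0 \<in> Field \<gamma>" "\<And>a. a \<in> Field \<gamma> \<Longrightarrow> (e0, a) \<in> \<gamma>" using wo_min_ex[OF g gn] by blast
  let ?finv = "inv_into (F W) f"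
  have finv: "\<And>q. q \<in> F ?Y \<Longrightarrow> ?finv q \<in> F W \<and> f (?finv q) = q"
  proof -
    fix q assume q: "q \<in> F ?Y"
    have bi: "bij_betw ?finv (F ?Y) (F W)" using bij_betw_inv_into[OF wisof_props(1)[OF f]] .
    show "?finv q \<in> F W \<and> f (?finv q) = q"
      using bij_betwE[OF bi] q bij_betw_inv_into_right[OF wisof_props(1)[OF f] q] by blast
  qed
  have ordback: "\<And>a b. a \<in> F W \<Longrightarrow> b \<in> F W \<Longrightarrow> (f a, f b) \<in> fst ?Y \<Longrightarrow> f a \<noteq> f b \<Longrightarrow> (a, b) \<in> fst W \<and> a \<noteq> b"
    using wisof_props(2)[OF f] by auto
  have dcY: "\<And>J. dc \<gamma> J \<Longrightarrow> dc (fst ?Y) {pe i b | i b. i \<in> F y \<and> b \<in> J}"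
  proof -
    fix J assume J: "dc \<gamma> J"
    show "dc (fst ?Y) {pe i b | i b. i \<in> F y \<and> b \<in> J}" unfolding dc_def
    proof (intro conjI ballI allI impI)
      show "{pe i b | i b. i \<in> F y \<and> b \<in> J} \<subseteq> F ?Y" using FY dc_sub[OF J] by blast
      fix n m assume n: "n \<in> {pe i b | i b. i \<in> F y \<and> b \<in> J}" and mn: "(m, n) \<in> fst ?Y"
      obtain i b where ib: "n = pe i b" "i \<in> F y" "b \<in> J" using n by blast
      obtain i' b' where m: "m = pe i' b'" by (rule nat_cases_prod)
      have "i' \<in> F y" "(b', b) \<in> \<gamma>" using mn ib m wo_refl[OF g] by auto
      then show "m \<in> {pe i b | i b. i \<in> F y \<and> b \<in> J}" using dc_down[OF J ib(3)] m by blast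
    qed
  qed
  have subY: "\<And>J. J \<subseteq> Field \<gamma> \<Longrightarrow> sub ?Y {pe i b | i b. i \<in> F y \<and> b \<in> J} = wpow y (Restr \<gamma> J)"
    using sub_wpow[OF y g] by blast
  show "ord_eq \<gamma> ord_one \<and> word_iso y W"
  proof (cases "\<forall>e\<in>Field \<gamma>. e = e0")
    case True
    then have Fg: "Field \<gamma> = {e0}" using e0(1) by blast
    have "Restr \<gamma> {e0} = \<gamma>" using Restr_Field[of \<gamma>] Fg by simp
    then have "word_iso ?Y y" using wpow_single[OF y g e0(1)] by simp
    then have "word_iso y W" using word_iso_sym asm word_iso_trans by blast
    then show ?thesis using ord_eq_one[OF g Fg] by blast
  next
    case False
    then obtain e1 where e1: "e1 \<in> Field \<gamma>" "e1 \<noteq> e0" by blast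
    have fg0: "f g0 \<in> F ?Y" using wisof_props(4)[OF f g0] .
    then obtain k e where ke: "f g0 = pe k e" "k \<in> F y" "e \<in> Field \<gamma>" using FY by blast
    show ?thesis
    proof (cases "\<exists>e'\<in>Field \<gamma>. (e, e') \<in> \<gamma> \<and> e \<noteq> e'")
      case True
      then obtain e' where e': "e' \<in> Field \<gamma>" "(e, e') \<in> \<gamma>" "e \<noteq> e'" by blast
      let ?q = "pe my e'"
      have qF: "?q \<in> F ?Y" using my(1) e'(1) y g by simp
      obtain g' where g': "g' \<in> F W" "f g' = ?q" using finv[OF qF] by blast
      have "(f g0, f g') \<in> fst ?Y" "f g0 \<noteq> f g'" using ke e' g' my(1) by auto
      then have "(g0, g') \<in> fst W" using ordback[OF g0 g'(1)] by blast
      then have st: "strp W (sub W (ge (fst W) g'))" using after[OF g'(1)] by blast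
      have 1: "word_iso (sub W (ge (fst W) g')) (sub ?Y (ge (fst ?Y) ?q))"
        using iso_final[OF f W g'(1)] g'(2) by simp
      have geq: "ge (fst ?Y) ?q = {pe i b | i b. i \<in> F y \<and> b \<in> ge \<gamma> e'}"
      proof -
        have "ge (fst ?Y) ?q = (\<lambda>i'. pe i' e') ` ge (fst y) my \<union> {pe i' b' | i' b'. i' \<in> F y \<and> b' \<in> aboveS \<gamma> e'}"
          using ge_pe[OF y g my(1) e'(1)] .
        moreover have "ge (fst y) my = F y" using ge_min[of "fst y" my] my(2) by blast
        moreover have "ge \<gamma> e' = insert e' (aboveS \<gamma> e')"
          unfolding ge_def aboveS_def using e'(1) wo_refl[OF g e'(1)] by (auto intro: FieldI2)
        ultimately show ?thesis by auto
      qed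
      have geF: "ge \<gamma> e' \<subseteq> Field \<gamma>" by (rule ge_Field)
      have 2: "sub ?Y (ge (fst ?Y) ?q) = wpow y (Restr \<gamma> (ge \<gamma> e'))" unfolding geq using subY[OF geF] .
      have le: "Restr \<gamma> (ge \<gamma> e') \<le>o \<gamma>" using subset_ordLeq[OF g geF] .
      obtain J where J: "dc \<gamma> J" "Restr \<gamma> (ge \<gamma> e') =o Restr \<gamma> J" using ordLeq_dc[OF g le] by blast
      have 3: "word_iso (wpow y (Restr \<gamma> (ge \<gamma> e'))) (wpow y (Restr \<gamma> J))" using wpow_exp_iso[OF y J(2)] .
      have 4: "wpow y (Restr \<gamma> J) = sub ?Y {pe i b | i b. i \<in> F y \<and> b \<in> J}" using subY[OF dc_sub[OF J(1)]] by simp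
      have "word_iso (sub W (ge (fst W) g')) (sub ?Y {pe i b | i b. i \<in> F y \<and> b \<in> J})"
        using word_iso_trans[OF 1 word_iso_trans[OF _ 3]] 2 4 by simp
      then have "pref (sub W (ge (fst W) g')) ?Y" using pref_dc[OF Y] dcY[OF J(1)] by blast
      then have "pref (sub W (ge (fst W) g')) W" using pref_iso_r[OF Y word_iso_sym[OF asm[THEN conjunct2, THEN conjunct2]]] by blast
      then show ?thesis using strp_pref_contra1[OF W wo_sub[OF W] st] by blast
    next
      case False
      then have emax: "\<And>e'. e' \<in> Field \<gamma> \<Longrightarrow> (e, e') \<in> \<gamma> \<Longrightarrow> e' = e" by blast
      have ene: "e \<noteq> e0"
      proof
        assume ee: "e = e0"
        then have "(e, e1) \<in> \<gamma>" using e0(2)[OF e1(1)] by simp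
        then have "e1 = e0" using emax[OF e1(1)] ee by simp
        then show False using e1(2) by simp
      qed
      define qq where "qq = pe my e"
      define q0 where "q0 = pe my e0"
      have qF: "qq \<in> F ?Y" unfolding qq_def using my(1) ke(3) y g by simp
      have q0F: "q0 \<in> F ?Y" unfolding q0_def using my(1) e0(1) y g by simp
      obtain g' where g': "g' \<in> F W" "f g' = qq" using finv[OF qF] by blast
      obtain i0 where i0: "i0 \<in> F W" "f i0 = q0" using finv[OF q0F] by blast
      have "(f i0, f g') \<in> fst ?Y" "f i0 \<noteq> f g'" using i0 g' my(1) e0 ke(3) ene wo_refl[OF y my(1)] unfolding qq_def q0_def by auto
      then have ig: "(i0, g') \<in> fst W" "i0 \<noteq> g'" using ordback[OF i0(1) g'(1)] by blast+
      have alt: "strp W (sub W (ge (fst W) g')) \<or> word_iso W (sub W (ge (fst W) g'))"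
        using sufall[OF g'(1) i0(1) ig] .
      have 1: "word_iso (sub W (ge (fst W) g')) (sub ?Y (ge (fst ?Y) qq))"
        using iso_final[OF f W g'(1)] g'(2) by simp
      have gee: "ge \<gamma> e = {e}" unfolding ge_def using emax ke(3) wo_refl[OF g ke(3)] by auto
      have geq: "ge (fst ?Y) qq = {pe i b | i b. i \<in> F y \<and> b \<in> {e}}"
      proof -
        have "ge (fst ?Y) qq = (\<lambda>i'. pe i' e) ` ge (fst y) my \<union> {pe i' b' | i' b'. i' \<in> F y \<and> b' \<in> aboveS \<gamma> e}"
          unfolding qq_def using ge_pe[OF y g my(1) ke(3)] .
        moreover have "ge (fst y) my = F y" using ge_min[of "fst y" my] my(2) by blast
        moreover have "aboveS \<gamma> e = {}" unfolding aboveS_def using emax by (auto intro: FieldI2)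
        ultimately show ?thesis by auto
      qed
      have eF: "{e} \<subseteq> Field \<gamma>" using ke(3) by simp
      have e0F: "{e0} \<subseteq> Field \<gamma>" using e0(1) by simp
      have 2: "word_iso (sub W (ge (fst W) g')) y"
        using word_iso_trans[OF 1[unfolded geq subY[OF eF]] wpow_single[OF y g ke(3)]] .
      have dc0: "dc (fst ?Y) {pe i b | i b. i \<in> F y \<and> b \<in> {e0}}"
      proof (rule dcY)
        show "dc \<gamma> {e0}" unfolding dc_def using e0 wo_antisym[OF g] by (auto intro: FieldI1)
      qed
      have 3: "word_iso y (sub ?Y {pe i b | i b. i \<in> F y \<and> b \<in> {e0}})"
        using word_iso_sym[OF wpow_single[OF y g e0(1)]] subY[OF e0F] by simp
      have pyY: "pref y ?Y" using pref_dc[OF Y] dc0 3 by blast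
      have pyW: "pref y W" using pref_iso_r[OF Y word_iso_sym[OF asm[THEN conjunct2, THEN conjunct2]] pyY] .
      from alt show ?thesis
      proof
        assume "strp W (sub W (ge (fst W) g'))"
        then have "strp W y" using strp_iso[OF W wo_sub[OF W] _ word_iso_refl 2] by blast
        then show ?thesis using strp_pref_contra1[OF W y _ pyW] by blast
      next
        assume h: "word_iso W (sub W (ge (fst W) g'))"
        have "word_iso ?Y (sub ?Y {pe i b | i b. i \<in> F y \<and> b \<in> {e0}})"
          using word_iso_trans[OF word_iso_sym[OF asm[THEN conjunct2, THEN conjunct2]]
              word_iso_trans[OF h word_iso_trans[OF 2 3]]] .
        then have "word_iso ?Y (sub ?Y {pe i b | i b. i \<in> F y \<and> b \<in> {e0}})" .
        then have "{pe i b | i b. i \<in> F y \<and> b \<in> {e0}} = F ?Y" using iso_sub_dc'[OF Y dc0] by blast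
        then have "qq \<in> {pe i b | i b. i \<in> F y \<and> b \<in> {e0}}" using qF by simp
        then show ?thesis using ene unfolding qq_def by auto
      qed
    qed
  qed
  qed
qed




lemma wo_empty': "WO ew" using wo_empty by simp

lemma W_decomp:
  assumes u: "WO u" and v: "WO v" and a: "Well_order \<alpha>" and b: "Well_order \<beta>"
    and eta: "Well_order \<eta>" and x: "WO x" and dec: "word_iso v (conc (wpow u \<eta>) x)"
    and c0: "c0 \<in> Field \<beta>" "\<And>c. c \<in> Field \<beta> \<Longrightarrow> (c0, c) \<in> \<beta>"
  shows "word_iso (conc (wpow u \<alpha>) (wpow v \<beta>))
     (conc (wpow u (rsum \<alpha> \<eta>)) (conc x (wpow v (Restr \<beta> (Field \<beta> - {c0})))))"
proof -
  have tw: "WO (wpow v (Restr \<beta> (Field \<beta> - {c0})))" using wo_wpow[OF v wo_Restr[OF b]] .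
  show ?thesis
    using word_iso_trans[OF word_iso_conc_r[OF tail_dec[OF v b c0]] conc_shift[OF u v x tw eta a dec]] .
qed

lemma W_iso_case:
  assumes u: "WO u" and v: "WO v" and a: "Well_order \<alpha>" and b: "Well_order \<beta>" and bn: "Field \<beta> \<noteq> {}"
    and eta: "Well_order \<eta>" and x: "WO x" and dec: "word_iso v (conc (wpow u \<eta>) x)"
    and io: "\<eta> =o rsum \<alpha> \<eta>"
  shows "word_iso (conc (wpow u \<alpha>) (wpow v \<beta>)) (wpow v \<beta>)"
proof -
  obtain c0 where c0: "c0 \<in> Field \<beta>" "\<And>c. c \<in> Field \<beta> \<Longrightarrow> (c0, c) \<in> \<beta>" using wo_min_ex[OF b bn] by blast
  let ?tw = "wpow v (Restr \<beta> (Field \<beta> - {c0}))"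
  have 1: "word_iso (conc (wpow u \<alpha>) (wpow v \<beta>)) (conc (wpow u (rsum \<alpha> \<eta>)) (conc x ?tw))"
    using W_decomp[OF u v a b eta x dec c0] .
  have 2: "word_iso (conc (wpow u (rsum \<alpha> \<eta>)) (conc x ?tw)) (conc (wpow u \<eta>) (conc x ?tw))"
    using word_iso_conc_l[OF wpow_exp_iso[OF u ordIso_symmetric[OF io]]] .
  have 3: "word_iso (conc (wpow u \<eta>) (conc x ?tw)) (conc v ?tw)"
    using word_iso_trans[OF word_iso_sym[OF conc_assoc] word_iso_conc_l[OF word_iso_sym[OF dec]]] .
  have 4: "word_iso (conc v ?tw) (wpow v \<beta>)" using word_iso_sym[OF tail_dec[OF v b c0]] .
  show ?thesis using word_iso_trans[OF word_iso_trans[OF word_iso_trans[OF 1 2] 3] 4] .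
qed

lemma W_prime:
  assumes pu: "prime_word u" and pv: "prime_word v" and a: "Well_order \<alpha>" and an: "Field \<alpha> \<noteq> {}"
    and b: "Well_order \<beta>" and bn: "Field \<beta> \<noteq> {}"
    and eta: "Well_order \<eta>" and x: "WO x" and dec: "word_iso v (conc (wpow u \<eta>) x)"
    and sux: "strp u x" and lt: "\<eta> <o rsum \<alpha> \<eta>"
  shows "prime_word (conc (wpow u \<alpha>) (wpow v \<beta>))"
proof -
  have u: "WO u" using prime_wo[OF pu] .
  have v: "WO v" using prime_wo[OF pv] .
  have un: "F u \<noteq> {}" using prim_nonempty[OF prime_prim[OF pu]] .
  have vn: "F v \<noteq> {}" using prim_nonempty[OF prime_prim[OF pv]] .
  define WA where "WA = wpow u \<alpha>"
  define WB where "WB = wpow v \<beta>"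
  define W where "W = conc WA WB"
  have WA: "WO WA" unfolding WA_def using wo_wpow[OF u a] .
  have WB: "WO WB" unfolding WB_def using wo_wpow[OF v b] .
  have W: "WO W" unfolding W_def using wo_conc[OF WA WB] .
  obtain c0 where c0: "c0 \<in> Field \<beta>" "\<And>c. c \<in> Field \<beta> \<Longrightarrow> (c0, c) \<in> \<beta>" using wo_min_ex[OF b bn] by blast
  obtain a0 where a0: "a0 \<in> Field \<alpha>" "\<And>c. c \<in> Field \<alpha> \<Longrightarrow> (a0, c) \<in> \<alpha>" using wo_min_ex[OF a an] by blast
  obtain mv where mv: "mv \<in> F v" "\<And>c. c \<in> F v \<Longrightarrow> (mv, c) \<in> fst v" using wo_min_ex[OF v vn] by blast
  obtain mu where mu: "mu \<in> F u" "\<And>c. c \<in> F u \<Longrightarrow> (mu, c) \<in> fst u" using wo_min_ex[OF u un] by blast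
  define tw where "tw = wpow v (Restr \<beta> (Field \<beta> - {c0}))"
  have tw: "WO tw" unfolding tw_def using wo_wpow[OF v wo_Restr[OF b]] .
  define R where "R = rsum \<alpha> \<eta>"
  have R: "Well_order R" unfolding R_def using wo_rsum[OF a eta] .
  have td: "word_iso WB (conc v tw)" unfolding WB_def tw_def using tail_dec[OF v b c0] .
  have WR: "word_iso W (conc (wpow u R) (conc x tw))"
    unfolding W_def WA_def WB_def R_def tw_def using W_decomp[OF u v a b eta x dec c0] .
  have L: "WO (conc (wpow u R) (conc x tw))" using wo_conc[OF wo_wpow[OF u R] wo_conc[OF x tw]] .
  have KEY: "\<And>t'. WO t' \<Longrightarrow> strp W (conc v t')"
  proof -
    fix t' :: "'a word" assume t': "WO t'"
    have m: "strp (conc (wpow u R) (conc x tw)) (conc (wpow u \<eta>) (conc x t'))"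
      using M[OF u x tw t' sux R lt[folded R_def]] .
    have i: "word_iso (conc v t') (conc (wpow u \<eta>) (conc x t'))"
      using word_iso_trans[OF word_iso_conc_l[OF dec] conc_assoc] .
    have r: "WO (conc (wpow u \<eta>) (conc x t'))" using wo_conc[OF wo_wpow[OF u eta] wo_conc[OF x t']] .
    show "strp W (conc v t')" using strp_iso[OF L r m word_iso_sym[OF WR] word_iso_sym[OF i]] .
  qed
  have SWv: "strp W v" using strp_iso[OF W wo_conc[OF v wo_empty'] KEY[OF wo_empty'] word_iso_refl conc_ew_r] .
  have CMP: "\<And>b0. b0 \<in> Field \<alpha> \<Longrightarrow> strp W (conc (wpow u (Restr \<alpha> (ge \<alpha> b0))) WB) \<or> word_iso W (conc (wpow u (Restr \<alpha> (ge \<alpha> b0))) WB)"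
  proof -
    fix b0 assume b0: "b0 \<in> Field \<alpha>"
    let ?A = "ge \<alpha> b0"
    let ?a' = "Restr \<alpha> ?A"
    let ?Z = "conc (wpow u ?a') WB"
    have AF: "?A \<subseteq> Field \<alpha>" by (rule ge_Field)
    have a': "Well_order ?a'" using wo_Restr[OF a] .
    have Zi: "word_iso ?Z (conc (wpow u (rsum ?a' \<eta>)) (conc x tw))"
      unfolding WB_def tw_def using W_decomp[OF u v a' b eta x dec c0] .
    let ?S = "sl ` ?A \<union> sr ` Field \<eta>"
    have eq: "rsum ?a' \<eta> = Restr R ?S" unfolding R_def using rsum_Restr_eq[OF a AF eta] .
    have SF: "?S \<subseteq> Field R" unfolding R_def Field_rsum using AF by blast
    have le: "Restr R ?S \<le>o R" using subset_ordLeq[OF R SF] .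
    show "strp W ?Z \<or> word_iso W ?Z"
    proof (cases "Restr R ?S =o R")
      case True
      have "word_iso (conc (wpow u (rsum ?a' \<eta>)) (conc x tw)) (conc (wpow u R) (conc x tw))"
        unfolding eq using word_iso_conc_l[OF wpow_exp_iso[OF u True]] .
      then have "word_iso ?Z W" using word_iso_trans[OF Zi word_iso_trans[OF _ word_iso_sym[OF WR]]] by blast
      then show ?thesis using word_iso_sym by blast
    next
      case False
      then have lt2: "Restr R ?S <o R" using le ordLeq_iff_ordLess_or_ordIso by blast
      have m: "strp (conc (wpow u R) (conc x tw)) (conc (wpow u (Restr R ?S)) (conc x tw))"
        using M[OF u x tw tw sux R lt2] .
      have r: "WO (conc (wpow u (Restr R ?S)) (conc x tw))" using wo_conc[OF wo_wpow[OF u wo_Restr[OF R]] wo_conc[OF x tw]] .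
      have "strp W ?Z" using strp_iso[OF L r m word_iso_sym[OF WR] word_iso_sym[OF Zi[unfolded eq]]] .
      then show ?thesis by blast
    qed
  qed
  have SLr: "\<And>n. sr n \<in> F W \<Longrightarrow> strp W (sub W (ge (fst W) (sr n)))"
  proof -
    fix n assume nF: "sr n \<in> F W"
    have nB: "n \<in> F WB" using nF unfolding W_def F_conc by auto
    then obtain j c where jc: "n = pe j c" "j \<in> F v" "c \<in> Field \<beta>" unfolding WB_def using Field_wpow[OF v b] by blast
    let ?s = "sub v (ge (fst v) j)" and ?t1 = "wpow v (Restr \<beta> (aboveS \<beta> c))"
    let ?z = "conc ?s ?t1"
    have s: "WO ?s" using wo_sub[OF v] .
    have t1: "WO ?t1" using wo_wpow[OF v wo_Restr[OF b]] .
    have z: "WO ?z" using wo_conc[OF s t1] .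
    have g1: "ge (fst W) (sr n) = sr ` ge (fst WB) n" unfolding W_def using ge_sr by simp
    have e1': "word_iso (sub (conc WA WB) (sr ` ge (fst WB) n)) ?z"
      using word_iso_trans[OF sub_conc_r[OF WA WB ge_Field] fin_wpow[OF v b jc(2,3), folded WB_def, folded jc(1)]] .
    have e1: "word_iso (sub W (ge (fst W) (sr n))) ?z" using e1' g1 unfolding W_def by simp
    have "strp W ?z"
    proof (cases "\<exists>i\<in>F v. (i, j) \<in> fst v \<and> i \<noteq> j")
      case True
      then obtain i where i: "i \<in> F v" "(i, j) \<in> fst v" "i \<noteq> j" by blast
      have psz: "pref ?s ?z" using pref_conc[OF s t1] .
      have "pref v ?s \<or> strp v ?s" using prime_suffix[OF pv v jc(2) i] .
      then show ?thesis
      proof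
        assume "pref v ?s"
        then have "pref v ?z" using pref_trans[OF s z _ psz] by blast
        then show ?thesis using strp_pref_r[OF W v z SWv] by blast
      next
        assume "strp v ?s"
        then have "strp v ?z" using strp_pref_r[OF v s z _ psz] by blast
        then show ?thesis using strp_trans[OF W v z SWv] by blast
      qed
    next
      case False
      have "ge (fst v) j = F v" using ge_min[of "fst v" j] not_min_or_min[OF v jc(2) False] by blast
      then have "?s = v" by simp
      then show ?thesis using KEY[OF t1] by simp
    qed
    then show "strp W (sub W (ge (fst W) (sr n)))" using strp_iso[OF W z _ word_iso_refl word_iso_sym[OF e1]] by blast
  qed
  have puW: "pref u W"
  proof -
    have "word_iso WA (conc u (wpow u (Restr \<alpha> (Field \<alpha> - {a0}))))" unfolding WA_def using tail_dec[OF u a a0] .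
    then have "pref u WA" using pref_iso_r[OF wo_conc[OF u wo_wpow[OF u wo_Restr[OF a]]] _ pref_conc[OF u wo_wpow[OF u wo_Restr[OF a]]]] word_iso_sym by blast
    then show ?thesis using pref_trans[OF WA W _ ] pref_conc[OF WA WB] unfolding W_def by blast
  qed
  have SLl: "\<And>n. sl n \<in> F W \<Longrightarrow> strp W (sub W (ge (fst W) (sl n))) \<or> word_iso W (sub W (ge (fst W) (sl n)))"
  proof -
    fix n assume nF: "sl n \<in> F W"
    have nA: "n \<in> F WA" using nF unfolding W_def F_conc by auto
    then obtain i bb where ib: "n = pe i bb" "i \<in> F u" "bb \<in> Field \<alpha>" unfolding WA_def using Field_wpow[OF u a] by blast
    let ?s = "sub u (ge (fst u) i)" and ?t2 = "wpow u (Restr \<alpha> (aboveS \<alpha> bb))"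
    let ?z = "conc (conc ?s ?t2) WB"
    have s: "WO ?s" using wo_sub[OF u] .
    have t2: "WO ?t2" using wo_wpow[OF u wo_Restr[OF a]] .
    have st2: "WO (conc ?s ?t2)" using wo_conc[OF s t2] .
    have z: "WO ?z" using wo_conc[OF st2 WB] .
    have g1: "ge (fst W) (sl n) = sl ` ge (fst WA) n \<union> sr ` F WB" unfolding W_def using ge_sl[OF nA] by simp
    have e0: "sub W (sl ` ge (fst WA) n \<union> sr ` F WB) = conc (sub WA (ge (fst WA) n)) WB"
      unfolding W_def using sub_conc[OF WA WB ge_Field subset_refl] by simp
    have e2': "word_iso (conc (sub WA (ge (fst WA) n)) WB) ?z"
      using word_iso_conc_l[OF fin_wpow[OF u a ib(2,3), folded WA_def, folded ib(1)]] .
    have e2: "word_iso (sub W (ge (fst W) (sl n))) ?z" using e2' g1 e0 by simp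
    have alt: "word_iso ?s u \<or> strp u ?s"
    proof (cases "\<exists>k\<in>F u. (k, i) \<in> fst u \<and> k \<noteq> i")
      case True
      then obtain k where k: "k \<in> F u" "(k, i) \<in> fst u" "k \<noteq> i" by blast
      have "pref u ?s \<or> strp u ?s" using prime_suffix[OF pu u ib(2) k] .
      then show ?thesis using pref_sub_iso[OF u ge_Field] word_iso_sym by blast
    next
      case False
      have "ge (fst u) i = F u" using ge_min[of "fst u" i] not_min_or_min[OF u ib(2) False] by blast
      then show ?thesis by simp
    qed
    show "strp W (sub W (ge (fst W) (sl n))) \<or> word_iso W (sub W (ge (fst W) (sl n)))"
    proof (cases "strp u ?s")
      case True
      have psz: "pref ?s ?z" using pref_trans[OF st2 z pref_conc[OF s t2] pref_conc[OF st2 WB]] .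
      have "strp W ?s" using strp_pref_l[OF u s W True puW] .
      then have "strp W ?z" using strp_pref_r[OF W s z _ psz] by blast
      then show ?thesis using strp_iso[OF W z _ word_iso_refl word_iso_sym[OF e2]] by blast
    next
      case False
      then have su: "word_iso ?s u" using alt by blast
      have bS: "{bb} \<subseteq> Field \<alpha>" using ib(3) by simp
      have AS: "aboveS \<alpha> bb \<subseteq> Field \<alpha>" unfolding aboveS_def by (auto intro: FieldI2)
      have ps: "word_iso (conc (wpow u (Restr \<alpha> {bb})) ?t2) (wpow u (Restr \<alpha> ({bb} \<union> aboveS \<alpha> bb)))"
        by (rule power_split[OF u a bS AS]) (auto simp: aboveS_def)
      have geb: "{bb} \<union> aboveS \<alpha> bb = ge \<alpha> bb"
        unfolding ge_def aboveS_def using ib(3) wo_refl[OF a ib(3)] by (auto intro: FieldI2)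
      have 1: "word_iso (conc ?s ?t2) (wpow u (Restr \<alpha> (ge \<alpha> bb)))"
        using word_iso_trans[OF word_iso_conc_l[OF word_iso_trans[OF su word_iso_sym[OF wpow_single[OF u a ib(3)]]]] ps[unfolded geb]] .
      have 2: "word_iso (sub W (ge (fst W) (sl n))) (conc (wpow u (Restr \<alpha> (ge \<alpha> bb))) WB)"
        using word_iso_trans[OF e2 word_iso_conc_l[OF 1]] .
      have Z: "WO (conc (wpow u (Restr \<alpha> (ge \<alpha> bb))) WB)" using wo_conc[OF wo_wpow[OF u wo_Restr[OF a]] WB] .
      from CMP[OF ib(3)] show ?thesis
      proof
        assume "strp W (conc (wpow u (Restr \<alpha> (ge \<alpha> bb))) WB)"
        then show ?thesis using strp_iso[OF W Z _ word_iso_refl word_iso_sym[OF 2]] by blast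
      next
        assume "word_iso W (conc (wpow u (Restr \<alpha> (ge \<alpha> bb))) WB)"
        then show ?thesis using word_iso_trans[OF _ word_iso_sym[OF 2]] by blast
      qed
    qed
  qed
  have sufall: "\<And>g i. g \<in> F W \<Longrightarrow> i \<in> F W \<Longrightarrow> (i, g) \<in> fst W \<Longrightarrow> i \<noteq> g \<Longrightarrow>
        strp W (sub W (ge (fst W) g)) \<or> word_iso W (sub W (ge (fst W) g))"
  proof -
    fix g i assume g: "g \<in> F W"
    show "strp W (sub W (ge (fst W) g)) \<or> word_iso W (sub W (ge (fst W) g))"
    proof (cases g rule: nat_cases_sum)
      case (1 n) then show ?thesis using SLl g by blast
    next
      case (2 n) then show ?thesis using SLr g by blast
    qed
  qed
  let ?g0 = "sr (pe mv c0)"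
  have g0: "?g0 \<in> F W" unfolding W_def F_conc WB_def using mv(1) c0(1) v b by simp
  have after: "\<And>g. g \<in> F W \<Longrightarrow> (?g0, g) \<in> fst W \<Longrightarrow> strp W (sub W (ge (fst W) g))"
  proof -
    fix g assume g: "g \<in> F W" and gg: "(?g0, g) \<in> fst W"
    show "strp W (sub W (ge (fst W) g))"
    proof (cases g rule: nat_cases_sum)
      case (1 n) then show ?thesis using gg unfolding W_def by simp
    next
      case (2 n) then show ?thesis using SLr g by blast
    qed
  qed
  have Wn: "F W \<noteq> {}" using g0 by blast
  have prim: "primitive W" using prim_from_suffix[OF W Wn sufall g0 after] .
  have suff: "\<forall>z. proper_suffix z W \<longrightarrow> lex_le W z"
  proof (intro allI impI)
    fix z assume "proper_suffix z W"
    then obtain g i where gi: "g \<in> F W" "i \<in> F W" "(i, g) \<in> fst W" "i \<noteq> g" "word_iso z (sub W (ge (fst W) g))"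
      by (rule proper_suffixE)
    have "strp W (sub W (ge (fst W) g)) \<or> word_iso W (sub W (ge (fst W) g))" using sufall[OF gi(1-4)] .
    then have "pref W (sub W (ge (fst W) g)) \<or> strp W (sub W (ge (fst W) g))" unfolding pref_def by blast
    then have "lex_le W (sub W (ge (fst W) g))" using lex_le_iff[OF W wo_sub[OF W]] by blast
    then show "lex_le W z" using lex_le_iso_r word_iso_sym[OF gi(5)] by blast
  qed
  show ?thesis using prim suff unfolding prime_word_def W_def WA_def WB_def by blast
qed




theorem mainTheorem15:
  fixes u v :: "'a::{finite, linorder} word" and \<alpha> \<beta> :: "nat rel"
  assumes "prime_word u" and "prime_word v" and "lex_le u v"
    and "is_ord \<alpha>" and "Field \<alpha> \<noteq> {}" and "is_ord \<beta>" and "Field \<beta> \<noteq> {}"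
  shows "\<exists>w \<gamma>. prime_word w \<and> is_ord \<gamma> \<and>
     word_iso (conc (wpow u \<alpha>) (wpow v \<beta>)) (wpow w \<gamma>) \<and>
     ((word_iso w v \<and> (ord_eq \<gamma> \<beta> \<or> ord_eq \<gamma> (ord_add \<alpha> \<beta>))) \<or>
      (word_iso w (conc (wpow u \<alpha>) (wpow v \<beta>)) \<and> ord_eq \<gamma> ord_one))"
proof -
  note pu = assms(1) and pv = assms(2) and lex = assms(3)
  have a: "Well_order \<alpha>" and b: "Well_order \<beta>" using assms(4,6) unfolding is_ord_def by auto
  have an: "Field \<alpha> \<noteq> {}" and bn: "Field \<beta> \<noteq> {}" using assms(5,7) .
  have u: "WO u" using prime_wo[OF pu] .
  have v: "WO v" using prime_wo[OF pv] .
  show ?thesis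
  proof (cases "word_iso u v")
    case True
    have 1: "word_iso (conc (wpow u \<alpha>) (wpow v \<beta>)) (conc (wpow v \<alpha>) (wpow v \<beta>))"
      using word_iso_conc_l[OF wpow_base_iso[OF u v a True]] .
    have 2: "word_iso (conc (wpow u \<alpha>) (wpow v \<beta>)) (wpow v (rsum \<alpha> \<beta>))"
      using word_iso_trans[OF 1 wpow_rsum[OF v a b]] .
    have 3: "is_ord (rsum \<alpha> \<beta>)" unfolding is_ord_def using wo_rsum[OF a b] .
    have 4: "ord_eq (rsum \<alpha> \<beta>) (ord_add \<alpha> \<beta>)" unfolding ord_add_def ord_eq_def by simp
    show ?thesis
      apply (rule exI[of _ v], rule exI[of _ "rsum \<alpha> \<beta>"])
      using pv 2 3 4 by simp
  next
    case False
    obtain \<eta> x where ex: "Well_order \<eta>" "WO x" "word_iso v (conc (wpow u \<eta>) x)" "strp u x"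
      using D[OF pu pv lex False] by blast
    have le: "\<eta> \<le>o rsum \<alpha> \<eta>"
    proof -
      have R: "Well_order (rsum \<alpha> \<eta>)" using wo_rsum[OF a ex(1)] .
      have SF: "sr ` Field \<eta> \<subseteq> Field (rsum \<alpha> \<eta>)" unfolding Field_rsum by blast
      show ?thesis using ordIso_ordLeq_trans[OF ordIso_Restr_sr[OF a ex(1)] subset_ordLeq[OF R SF]] .
    qed
    show ?thesis
    proof (cases "\<eta> =o rsum \<alpha> \<eta>")
      case True
      have 1: "word_iso (conc (wpow u \<alpha>) (wpow v \<beta>)) (wpow v \<beta>)"
        using W_iso_case[OF u v a b bn ex(1-3) True] .
      have 2: "ord_eq \<beta> \<beta>" unfolding ord_eq_def by simp
      show ?thesis
        apply (rule exI[of _ v], rule exI[of _ \<beta>])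
        using pv 1 2 assms(6) by simp
    next
      case False
      then have lt: "\<eta> <o rsum \<alpha> \<eta>" using le ordLeq_iff_ordLess_or_ordIso by blast
      let ?W = "conc (wpow u \<alpha>) (wpow v \<beta>)"
      have pW: "prime_word ?W" using W_prime[OF pu pv a an b bn ex lt] .
      have W: "WO ?W" using prime_wo[OF pW] .
      have 1: "word_iso ?W (wpow ?W ord_one)" using word_iso_sym[OF wpow_one[OF W]] .
      have 2: "is_ord ord_one" unfolding is_ord_def using wo_one .
      have 3: "ord_eq ord_one ord_one" unfolding ord_eq_def by simp
      show ?thesis
        apply (rule exI[of _ ?W], rule exI[of _ ord_one])
        using pW 1 2 3 by simp
    qed
  qed
qed


end
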